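(* Let $V$ be a nonlocal vertex algebra and let $F=\{F_n\}_{n\in\mathbb{Z}}$ be an increasing filtration of $V$ with $\mathbf{1}\in F_0$ such that $a_mF_n\subset F_{k+n-m-1}$ for all $a\in F_k$ and $k,m,n\in\mathbb{Z}$. Then the graded space $\mathrm{Gr}_F(V)=\coprod_{n\in\mathbb{Z}}F_n/F_{n-1}$ is a $\mathbb{Z}$-graded nonlocal vertex algebra with vacuum vector $\mathbf{1}+F_{-1}$ and with $(a+F_{m-1})_k(b+F_{n-1})=a_kb+F_{m+n-k-2}$ for $a\in F_m$, $b\in F_n$, $m,n,k\in\mathbb{Z}$. Furthermore, if $F$ is the filtration associated with a generating subset $T$ of $V$, then $\{u+F_0\mid u\in T\}\subset F_1/F_0$ is a generating subset of $\mathrm{Gr}_F(V)$.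
   Context: A nonlocal vertex algebra is a complex vector space $V$ with vector $\mathbf{1}$ and linear $Y:V\to\mathrm{Hom}(V,V((x)))$, $Y(v,x)=\sum_nv_nx^{-n-1}$, such that $Y(\mathbf{1},x)v=v$, $Y(v,x)\mathbf{1}\in V[[x]]$ with constant term $v$, and for $u,v,w$ there is $l\ge0$ with $(x_0+x_2)^lY(u,x_0+x_2)Y(v,x_2)w=(x_0+x_2)^lY(Y(u,x_0)v,x_2)w$. A generating subset $T$ is one such that the smallest nonlocal vertex subalgebra containing $T$ is $V$. A $\mathbb{Z}$-graded nonlocal vertex algebra is a nonlocal vertex algebra $U=\coprod_nU_{(n)}$ with $\mathbf{1}\in U_{(0)}$ and $u_kv\in U_{(m+n-k-1)}$ for $u\in U_{(m)},v\in U_{(n)}$. An increasing filtration is a family of subspaces with $F_n\subset F_{n+1}$. The filtration associated with a generating subset $T$: $F_n$ is the span of $u^{(1)}_{m_1}\cdots u^{(r)}_{m_r}\mathbf{1}$ with $u^{(i)}\in T$, $m_i\in\mathbb{Z}$, $m_1+\cdots+m_r\ge-n$, where $r\ge1$ if $n<0$ and $r\ge0$ if $n\ge0$ (this filtration satisfies the hypotheses above). *)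

theory Defs
  imports Complex_Main "HOL-Algebra.Module"
begin

definition CR :: "complex ring" where
  "CR = \<lparr>carrier = UNIV, mult = (*), one = 1, zero = 0, add = (+)\<rparr>"

text \<open>A complex vector space is a module over CR (record type (complex, 'v) module).
  Vertex operators are given by their modes: Y u n v is u_n v, where
  Y(u,x) v = sum_n u_n v x^(-n-1).\<close>

type_synonym 'v vop = "'v \<Rightarrow> int \<Rightarrow> 'v \<Rightarrow> 'v"

text \<open>Coefficient of x0^a x2^b in (x0+x2)^l Y(u,x0+x2) Y(v,x2) w.
  Only finitely many j contribute (those with v_(j-b-1) w nonzero), by truncation.\<close>
definition assoc_lhs :: "(complex, 'v) module \<Rightarrow> 'v vop \<Rightarrow> nat \<Rightarrow> 'v \<Rightarrow> 'v \<Rightarrow> 'v \<Rightarrow> int \<Rightarrow> int \<Rightarrow> 'v" where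
  "assoc_lhs M Y l u v w a b =
     finsum M (\<lambda>j::nat. ((of_int (a + int j) :: complex) gchoose j) \<odot>\<^bsub>M\<^esub>
                         Y u (int l - 1 - int j - a) (Y v (int j - b - 1) w))
              {j::nat. Y v (int j - b - 1) w \<noteq> \<zero>\<^bsub>M\<^esub>}"

text \<open>Coefficient of x0^a x2^b in (x0+x2)^l Y(Y(u,x0)v,x2) w.\<close>
definition assoc_rhs :: "(complex, 'v) module \<Rightarrow> 'v vop \<Rightarrow> nat \<Rightarrow> 'v \<Rightarrow> 'v \<Rightarrow> 'v \<Rightarrow> int \<Rightarrow> int \<Rightarrow> 'v" where
  "assoc_rhs M Y l u v w a b =
     finsum M (\<lambda>i::nat. (of_nat (l choose i) :: complex) \<odot>\<^bsub>M\<^esub>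
                         Y (Y u (int l - int i - 1 - a) v) (int i - b - 1) w)
              {0..l}"

definition nonlocal_va :: "(complex, 'v) module \<Rightarrow> 'v \<Rightarrow> 'v vop \<Rightarrow> bool" where
  "nonlocal_va M vac Y \<longleftrightarrow>
     module CR M \<and> vac \<in> carrier M \<and>
     (\<forall>u\<in>carrier M. \<forall>v\<in>carrier M. \<forall>n. Y u n v \<in> carrier M) \<and>
     \<comment> \<open>Y is linear in u and each Y(u,x) is linear in v\<close>
     (\<forall>u\<in>carrier M. \<forall>u'\<in>carrier M. \<forall>v\<in>carrier M. \<forall>n.
        Y (u \<oplus>\<^bsub>M\<^esub> u') n v = Y u n v \<oplus>\<^bsub>M\<^esub> Y u' n v) \<and>
     (\<forall>c::complex. \<forall>u\<in>carrier M. \<forall>v\<in>carrier M. \<forall>n.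
        Y (c \<odot>\<^bsub>M\<^esub> u) n v = c \<odot>\<^bsub>M\<^esub> Y u n v) \<and>
     (\<forall>u\<in>carrier M. \<forall>v\<in>carrier M. \<forall>v'\<in>carrier M. \<forall>n.
        Y u n (v \<oplus>\<^bsub>M\<^esub> v') = Y u n v \<oplus>\<^bsub>M\<^esub> Y u n v') \<and>
     (\<forall>c::complex. \<forall>u\<in>carrier M. \<forall>v\<in>carrier M. \<forall>n.
        Y u n (c \<odot>\<^bsub>M\<^esub> v) = c \<odot>\<^bsub>M\<^esub> Y u n v) \<and>
     \<comment> \<open>Y(u,x)v \<in> V((x))\<close>
     (\<forall>u\<in>carrier M. \<forall>v\<in>carrier M. \<exists>N. \<forall>n\<ge>N. Y u n v = \<zero>\<^bsub>M\<^esub>) \<and>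
     \<comment> \<open>Y(1,x)v = v\<close>
     (\<forall>v\<in>carrier M. \<forall>n. Y vac n v = (if n = -1 then v else \<zero>\<^bsub>M\<^esub>)) \<and>
     \<comment> \<open>Y(v,x)1 \<in> V[[x]] with constant term v\<close>
     (\<forall>v\<in>carrier M. (\<forall>n\<ge>0. Y v n vac = \<zero>\<^bsub>M\<^esub>) \<and> Y v (-1) vac = v) \<and>
     \<comment> \<open>weak associativity\<close>
     (\<forall>u\<in>carrier M. \<forall>v\<in>carrier M. \<forall>w\<in>carrier M. \<exists>l::nat. \<forall>a b.
        assoc_lhs M Y l u v w a b = assoc_rhs M Y l u v w a b)"

definition direct_sum_decomp :: "(complex, 'v) module \<Rightarrow> (int \<Rightarrow> 'v set) \<Rightarrow> bool" where
  "direct_sum_decomp M G \<longleftrightarrow>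
     (\<forall>n. submodule (G n) CR M) \<and>
     (\<forall>x\<in>carrier M. \<exists>!f. (\<forall>n. f n \<in> G n) \<and> finite {n. f n \<noteq> \<zero>\<^bsub>M\<^esub>} \<and>
                            x = finsum M f {n. f n \<noteq> \<zero>\<^bsub>M\<^esub>})"

definition graded_nonlocal_va :: "(complex, 'v) module \<Rightarrow> 'v \<Rightarrow> 'v vop \<Rightarrow> (int \<Rightarrow> 'v set) \<Rightarrow> bool" where
  "graded_nonlocal_va M vac Y G \<longleftrightarrow>
     nonlocal_va M vac Y \<and> direct_sum_decomp M G \<and> vac \<in> G 0 \<and>
     (\<forall>m n k u v. u \<in> G m \<longrightarrow> v \<in> G n \<longrightarrow> Y u k v \<in> G (m + n - k - 1))"

definition nonlocal_subalgebra :: "(complex, 'v) module \<Rightarrow> 'v \<Rightarrow> 'v vop \<Rightarrow> 'v set \<Rightarrow> bool" where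
  "nonlocal_subalgebra M vac Y S \<longleftrightarrow>
     submodule S CR M \<and> vac \<in> S \<and> (\<forall>u\<in>S. \<forall>v\<in>S. \<forall>n. Y u n v \<in> S)"

definition generating_subset :: "(complex, 'v) module \<Rightarrow> 'v \<Rightarrow> 'v vop \<Rightarrow> 'v set \<Rightarrow> bool" where
  "generating_subset M vac Y T \<longleftrightarrow>
     T \<subseteq> carrier M \<and>
     carrier M = \<Inter>{S. nonlocal_subalgebra M vac Y S \<and> T \<subseteq> S}"

definition lin_span :: "(complex, 'v) module \<Rightarrow> 'v set \<Rightarrow> 'v set" where
  "lin_span M S = \<Inter>{H. submodule H CR M \<and> S \<subseteq> H}"

fun word_val :: "'v vop \<Rightarrow> 'v \<Rightarrow> ('v \<times> int) list \<Rightarrow> 'v" where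
  "word_val Y vac [] = vac"
| "word_val Y vac ((u, m) # ws) = Y u m (word_val Y vac ws)"

definition assoc_filtration :: "(complex, 'v) module \<Rightarrow> 'v \<Rightarrow> 'v vop \<Rightarrow> 'v set \<Rightarrow> int \<Rightarrow> 'v set" where
  "assoc_filtration M vac Y T n =
     lin_span M {word_val Y vac ws | ws. set (map fst ws) \<subseteq> T \<and>
                   sum_list (map snd ws) \<ge> - n \<and> (n < 0 \<longrightarrow> ws \<noteq> [])}"

definition vcoset :: "(complex, 'v) module \<Rightarrow> 'v set \<Rightarrow> 'v \<Rightarrow> 'v set" where
  "vcoset M S x = {x \<oplus>\<^bsub>M\<^esub> y | y. y \<in> S}"

text \<open>Elements of Gr_F(V) = coprod_n F_n/F_(n-1): families g with g n a coset x + F_(n-1),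
  x \<in> F_n, and g n = F_(n-1) (the zero coset) for all but finitely many n.\<close>
definition gr_carrier :: "(complex, 'v) module \<Rightarrow> (int \<Rightarrow> 'v set) \<Rightarrow> (int \<Rightarrow> 'v set) set" where
  "gr_carrier M F = {g. (\<forall>n. \<exists>x\<in>F n. g n = vcoset M (F (n - 1)) x) \<and> finite {n. g n \<noteq> F (n - 1)}}"

definition gr_zero :: "(int \<Rightarrow> 'v set) \<Rightarrow> int \<Rightarrow> 'v set" where
  "gr_zero F = (\<lambda>n. F (n - 1))"

definition gr_add :: "(complex, 'v) module \<Rightarrow> (int \<Rightarrow> 'v set) \<Rightarrow> (int \<Rightarrow> 'v set) \<Rightarrow> int \<Rightarrow> 'v set" where
  "gr_add M g h = (\<lambda>n. {x \<oplus>\<^bsub>M\<^esub> y | x y. x \<in> g n \<and> y \<in> h n})"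

definition gr_smult :: "(complex, 'v) module \<Rightarrow> (int \<Rightarrow> 'v set) \<Rightarrow> complex \<Rightarrow> (int \<Rightarrow> 'v set) \<Rightarrow> int \<Rightarrow> 'v set" where
  "gr_smult M F c g = (\<lambda>n. {(c \<odot>\<^bsub>M\<^esub> x) \<oplus>\<^bsub>M\<^esub> y | x y. x \<in> g n \<and> y \<in> F (n - 1)})"

text \<open>The module structure of Gr_F(V); the ring fields mult and one are unused junk.\<close>
definition Gr :: "(complex, 'v) module \<Rightarrow> (int \<Rightarrow> 'v set) \<Rightarrow> (complex, int \<Rightarrow> 'v set) module" where
  "Gr M F = \<lparr>carrier = gr_carrier M F, mult = (\<lambda>_ _. gr_zero F), one = gr_zero F,
             zero = gr_zero F, add = gr_add M, smult = gr_smult M F\<rparr>"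

definition gr_hom :: "(complex, 'v) module \<Rightarrow> (int \<Rightarrow> 'v set) \<Rightarrow> int \<Rightarrow> 'v \<Rightarrow> int \<Rightarrow> 'v set" where
  "gr_hom M F m x = (\<lambda>n. if n = m then vcoset M (F (m - 1)) x else F (n - 1))"

definition gr_grading :: "(complex, 'v) module \<Rightarrow> (int \<Rightarrow> 'v set) \<Rightarrow> int \<Rightarrow> (int \<Rightarrow> 'v set) set" where
  "gr_grading M F n = gr_hom M F n ` F n"

end

theory Submission
  imports Defs
begin


lemma CR_simps[simp]: "carrier CR = UNIV" "a \<oplus>\<^bsub>CR\<^esub> b = a + b" "a \<otimes>\<^bsub>CR\<^esub> b = a * b"
  "\<one>\<^bsub>CR\<^esub> = 1" "\<zero>\<^bsub>CR\<^esub> = 0"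
  by (simp_all add: CR_def)

lemma nva_module: "nonlocal_va M vac Y \<Longrightarrow> module CR M"
  by (simp add: nonlocal_va_def)

lemma nva_D:
  assumes "nonlocal_va M vac Y"
  shows nva_vac: "vac \<in> carrier M"
  and nva_Ycl: "\<And>u v n. u \<in> carrier M \<Longrightarrow> v \<in> carrier M \<Longrightarrow> Y u n v \<in> carrier M"
  and nva_add1: "\<And>u u' v n. u \<in> carrier M \<Longrightarrow> u' \<in> carrier M \<Longrightarrow> v \<in> carrier M \<Longrightarrow> Y (u \<oplus>\<^bsub>M\<^esub> u') n v = Y u n v \<oplus>\<^bsub>M\<^esub> Y u' n v"
  and nva_sm1: "\<And>c u v n. u \<in> carrier M \<Longrightarrow> v \<in> carrier M \<Longrightarrow> Y (c \<odot>\<^bsub>M\<^esub> u) n v = c \<odot>\<^bsub>M\<^esub> Y u n v"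
  and nva_add2: "\<And>u v v' n. u \<in> carrier M \<Longrightarrow> v \<in> carrier M \<Longrightarrow> v' \<in> carrier M \<Longrightarrow> Y u n (v \<oplus>\<^bsub>M\<^esub> v') = Y u n v \<oplus>\<^bsub>M\<^esub> Y u n v'"
  and nva_sm2: "\<And>c u v n. u \<in> carrier M \<Longrightarrow> v \<in> carrier M \<Longrightarrow> Y u n (c \<odot>\<^bsub>M\<^esub> v) = c \<odot>\<^bsub>M\<^esub> Y u n v"
  and nva_trunc: "\<And>u v. u \<in> carrier M \<Longrightarrow> v \<in> carrier M \<Longrightarrow> \<exists>N. \<forall>n\<ge>N. Y u n v = \<zero>\<^bsub>M\<^esub>"
  and nva_vacY: "\<And>v n. v \<in> carrier M \<Longrightarrow> Y vac n v = (if n = -1 then v else \<zero>\<^bsub>M\<^esub>)"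
  and nva_cre: "\<And>v n. v \<in> carrier M \<Longrightarrow> n \<ge> 0 \<Longrightarrow> Y v n vac = \<zero>\<^bsub>M\<^esub>"
  and nva_cre1: "\<And>v. v \<in> carrier M \<Longrightarrow> Y v (-1) vac = v"
  and nva_assoc: "\<And>u v w. u \<in> carrier M \<Longrightarrow> v \<in> carrier M \<Longrightarrow> w \<in> carrier M \<Longrightarrow>
      \<exists>l::nat. \<forall>a b. assoc_lhs M Y l u v w a b = assoc_rhs M Y l u v w a b"
  using assms unfolding nonlocal_va_def by (meson, meson, meson, meson, meson, meson, meson, meson, meson, meson, meson)

lemma nva_Y_zero_r:
  assumes "nonlocal_va M vac Y" "u \<in> carrier M"
  shows "Y u k \<zero>\<^bsub>M\<^esub> = \<zero>\<^bsub>M\<^esub>"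
proof -
  interpret module CR M by (rule nva_module[OF assms(1)])
  have "Y u k \<zero>\<^bsub>M\<^esub> = Y u k ((0::complex) \<odot>\<^bsub>M\<^esub> \<zero>\<^bsub>M\<^esub>)" by simp
  also have "\<dots> = (0::complex) \<odot>\<^bsub>M\<^esub> Y u k \<zero>\<^bsub>M\<^esub>"
    using assms unfolding nonlocal_va_def by (meson zero_closed)
  also have "\<dots> = \<zero>\<^bsub>M\<^esub>"
    using assms unfolding nonlocal_va_def by (metis CR_simps(5) smult_l_null zero_closed)
  finally show ?thesis .
qed

lemma nva_Y_zero_l:
  assumes "nonlocal_va M vac Y" "v \<in> carrier M"
  shows "Y \<zero>\<^bsub>M\<^esub> k v = \<zero>\<^bsub>M\<^esub>"
proof -
  interpret module CR M by (rule nva_module[OF assms(1)])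
  have "Y \<zero>\<^bsub>M\<^esub> k v = Y ((0::complex) \<odot>\<^bsub>M\<^esub> \<zero>\<^bsub>M\<^esub>) k v" by simp
  also have "\<dots> = (0::complex) \<odot>\<^bsub>M\<^esub> Y \<zero>\<^bsub>M\<^esub> k v"
    using assms unfolding nonlocal_va_def by (meson zero_closed)
  also have "\<dots> = \<zero>\<^bsub>M\<^esub>"
    using assms unfolding nonlocal_va_def by (metis CR_simps(5) smult_l_null zero_closed)
  finally show ?thesis .
qed

lemma nva_J_finite:
  assumes "nonlocal_va M vac Y" "v \<in> carrier M" "w \<in> carrier M"
  shows "finite {j::nat. Y v (int j - b - 1) w \<noteq> \<zero>\<^bsub>M\<^esub>}"
proof -
  obtain N where N: "\<forall>n\<ge>N. Y v n w = \<zero>\<^bsub>M\<^esub>" using nva_trunc[OF assms] by meson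
  have "{j::nat. Y v (int j - b - 1) w \<noteq> \<zero>\<^bsub>M\<^esub>} \<subseteq> {..nat (N + b + 1)}"
    using N by (auto, smt (verit) of_nat_le_iff int_nat_eq)
  thus ?thesis using finite_subset by blast
qed

lemma hom_finsum:
  assumes M: "module CR M" and M': "module CR M'"
  and hadd: "\<And>x y. x \<in> carrier M \<Longrightarrow> y \<in> carrier M \<Longrightarrow> \<phi> (x \<oplus>\<^bsub>M\<^esub> y) = \<phi> x \<oplus>\<^bsub>M'\<^esub> \<phi> y"
  and hz: "\<phi> \<zero>\<^bsub>M\<^esub> = \<zero>\<^bsub>M'\<^esub>"
  and hc: "\<And>x. x \<in> carrier M \<Longrightarrow> \<phi> x \<in> carrier M'"
  and fin: "finite A" and f: "f \<in> A \<rightarrow> carrier M"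
  shows "\<phi> (finsum M f A) = finsum M' (\<lambda>i. \<phi> (f i)) A"
  using fin f
proof (induct A rule: finite_induct)
  case empty
  then show ?case using hz module.axioms(2)[OF M] module.axioms(2)[OF M']
    by (simp add: abelian_group.axioms(1) abelian_monoid.finsum_empty)
next
  case (insert x F)
  interpret m: module CR M by (rule M)
  interpret m': module CR M' by (rule M')
  show ?case using insert by (simp add: hadd Pi_def hc)
qed

lemma nva_image:
  fixes M :: "(complex,'a) module" and M' :: "(complex,'b) module"
  assumes nv: "nonlocal_va M vac Y"
  and surj: "\<phi> ` carrier M = carrier M'"
  and hadd: "\<And>x y. x \<in> carrier M \<Longrightarrow> y \<in> carrier M \<Longrightarrow> \<phi> (x \<oplus>\<^bsub>M\<^esub> y) = \<phi> x \<oplus>\<^bsub>M'\<^esub> \<phi> y"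
  and hsm: "\<And>c x. x \<in> carrier M \<Longrightarrow> \<phi> (c \<odot>\<^bsub>M\<^esub> x) = c \<odot>\<^bsub>M'\<^esub> \<phi> x"
  and hz: "\<phi> \<zero>\<^bsub>M\<^esub> = \<zero>\<^bsub>M'\<^esub>"
  and hY: "\<And>u v k. u \<in> carrier M \<Longrightarrow> v \<in> carrier M \<Longrightarrow> \<phi> (Y u k v) = Y' (\<phi> u) k (\<phi> v)"
  shows "nonlocal_va M' (\<phi> vac) Y'"
proof -
  interpret m: module CR M by (rule nva_module[OF nv])
  have hc: "\<And>x. x \<in> carrier M \<Longrightarrow> \<phi> x \<in> carrier M'" using surj by blast
  have ex: "\<And>x'. x' \<in> carrier M' \<Longrightarrow> \<exists>x\<in>carrier M. x' = \<phi> x" using surj by blast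
  note nvd = nva_D[OF nv]
  note Ycl = nva_Ycl[OF nv]
  have ag: "abelian_group M'"
  proof (rule abelian_groupI)
    fix x' y' assume a2: "x' \<in> carrier M'" "y' \<in> carrier M'"
    obtain x where x: "x \<in> carrier M" "x' = \<phi> x" using ex a2(1) by blast
    obtain y where y: "y \<in> carrier M" "y' = \<phi> y" using ex a2(2) by blast
    show "x' \<oplus>\<^bsub>M'\<^esub> y' \<in> carrier M'" using hadd[OF x(1) y(1)] hc[of "x \<oplus>\<^bsub>M\<^esub> y"] x y by simp
    show "x' \<oplus>\<^bsub>M'\<^esub> y' = y' \<oplus>\<^bsub>M'\<^esub> x'" using hadd[OF x(1) y(1)] hadd[OF y(1) x(1)] x y m.add.m_comm[OF x(1) y(1)] by simp
  next
    show "\<zero>\<^bsub>M'\<^esub> \<in> carrier M'" using hz hc[OF m.zero_closed] by simp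
  next
    fix x' y' z' assume a3: "x' \<in> carrier M'" "y' \<in> carrier M'" "z' \<in> carrier M'"
    obtain x where x: "x \<in> carrier M" "x' = \<phi> x" using ex a3(1) by blast
    obtain y where y: "y \<in> carrier M" "y' = \<phi> y" using ex a3(2) by blast
    obtain z where z: "z \<in> carrier M" "z' = \<phi> z" using ex a3(3) by blast
    have "x' \<oplus>\<^bsub>M'\<^esub> y' \<oplus>\<^bsub>M'\<^esub> z' = \<phi> (x \<oplus>\<^bsub>M\<^esub> y \<oplus>\<^bsub>M\<^esub> z)"
      using x y z by (simp add: hadd)
    also have "\<dots> = \<phi> (x \<oplus>\<^bsub>M\<^esub> (y \<oplus>\<^bsub>M\<^esub> z))" using x y z by (simp add: m.add.m_assoc)
    also have "\<dots> = x' \<oplus>\<^bsub>M'\<^esub> (y' \<oplus>\<^bsub>M'\<^esub> z')" using x y z by (simp add: hadd)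
    finally show "x' \<oplus>\<^bsub>M'\<^esub> y' \<oplus>\<^bsub>M'\<^esub> z' = x' \<oplus>\<^bsub>M'\<^esub> (y' \<oplus>\<^bsub>M'\<^esub> z')" .
  next
    fix x' assume "x' \<in> carrier M'"
    then obtain x where x: "x \<in> carrier M" "x' = \<phi> x" using ex by blast
    show "\<zero>\<^bsub>M'\<^esub> \<oplus>\<^bsub>M'\<^esub> x' = x'" using x hadd[OF m.zero_closed x(1)] hz by simp
    have "\<phi> (\<ominus>\<^bsub>M\<^esub> x) \<oplus>\<^bsub>M'\<^esub> x' = \<zero>\<^bsub>M'\<^esub>" using x hadd[OF m.a_inv_closed[OF x(1)] x(1)] hz by (simp add: m.l_neg)
    thus "\<exists>y\<in>carrier M'. y \<oplus>\<^bsub>M'\<^esub> x' = \<zero>\<^bsub>M'\<^esub>" using hc[OF m.a_inv_closed[OF x(1)]] by blast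
  qed
  have modM': "module CR M'"
  proof (rule moduleI)
    show "cring CR" using m.is_cring .
    show "abelian_group M'" by (rule ag)
  next
    fix a b x' assume "x' \<in> carrier M'"
    then obtain x where x: "x \<in> carrier M" "x' = \<phi> x" using ex by blast
    show "a \<odot>\<^bsub>M'\<^esub> x' \<in> carrier M'" using x hsm[OF x(1), of a] hc[OF m.smult_closed[OF _ x(1)], of a] by simp
    have "(a \<oplus>\<^bsub>CR\<^esub> b) \<odot>\<^bsub>M'\<^esub> x' = \<phi> (a \<odot>\<^bsub>M\<^esub> x \<oplus>\<^bsub>M\<^esub> b \<odot>\<^bsub>M\<^esub> x)"
      using x hsm[OF x(1), of "a+b"] m.smult_l_distr[OF _ _ x(1), of a b] by simp
    also have "\<dots> = a \<odot>\<^bsub>M'\<^esub> x' \<oplus>\<^bsub>M'\<^esub> b \<odot>\<^bsub>M'\<^esub> x'" using x by (simp add: hadd hsm)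
    finally show "(a \<oplus>\<^bsub>CR\<^esub> b) \<odot>\<^bsub>M'\<^esub> x' = a \<odot>\<^bsub>M'\<^esub> x' \<oplus>\<^bsub>M'\<^esub> b \<odot>\<^bsub>M'\<^esub> x'" .
    have "(a \<otimes>\<^bsub>CR\<^esub> b) \<odot>\<^bsub>M'\<^esub> x' = \<phi> (a \<odot>\<^bsub>M\<^esub> (b \<odot>\<^bsub>M\<^esub> x))"
      using x hsm[OF x(1), of "a*b"] m.smult_assoc1[OF _ _ x(1), of a b] by simp
    also have "\<dots> = a \<odot>\<^bsub>M'\<^esub> (b \<odot>\<^bsub>M'\<^esub> x')" using x by (simp add: hsm)
    finally show "(a \<otimes>\<^bsub>CR\<^esub> b) \<odot>\<^bsub>M'\<^esub> x' = a \<odot>\<^bsub>M'\<^esub> (b \<odot>\<^bsub>M'\<^esub> x')" .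
    show "\<one>\<^bsub>CR\<^esub> \<odot>\<^bsub>M'\<^esub> x' = x'" using x hsm[OF x(1), of 1] m.smult_one[OF x(1)] by simp
  next
    fix a x' y' assume a2: "x' \<in> carrier M'" "y' \<in> carrier M'"
    obtain x where x: "x \<in> carrier M" "x' = \<phi> x" using ex a2(1) by blast
    obtain y where y: "y \<in> carrier M" "y' = \<phi> y" using ex a2(2) by blast
    have "a \<odot>\<^bsub>M'\<^esub> (x' \<oplus>\<^bsub>M'\<^esub> y') = \<phi> (a \<odot>\<^bsub>M\<^esub> x \<oplus>\<^bsub>M\<^esub> a \<odot>\<^bsub>M\<^esub> y)"
      using x y hadd[OF x(1) y(1)] hsm[of "x \<oplus>\<^bsub>M\<^esub> y" a] m.smult_r_distr[OF _ x(1) y(1), of a] by simp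
    also have "\<dots> = a \<odot>\<^bsub>M'\<^esub> x' \<oplus>\<^bsub>M'\<^esub> a \<odot>\<^bsub>M'\<^esub> y'" using x y by (simp add: hadd hsm)
    finally show "a \<odot>\<^bsub>M'\<^esub> (x' \<oplus>\<^bsub>M'\<^esub> y') = a \<odot>\<^bsub>M'\<^esub> x' \<oplus>\<^bsub>M'\<^esub> a \<odot>\<^bsub>M'\<^esub> y'" .
  qed
  interpret m': module CR M' by (rule modM')
  have Y'0: "Y' (\<phi> u) k \<zero>\<^bsub>M'\<^esub> = \<zero>\<^bsub>M'\<^esub>" if "u \<in> carrier M" for u k
  proof -
    have "Y' (\<phi> u) k \<zero>\<^bsub>M'\<^esub> = \<phi> (Y u k \<zero>\<^bsub>M\<^esub>)" using hY[OF that m.zero_closed, of k] hz by simp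
    thus ?thesis using nva_Y_zero_r[OF nv that] hz by simp
  qed
  have Y'cl: "Y' (\<phi> u) k (\<phi> v) \<in> carrier M'" if "u \<in> carrier M" "v \<in> carrier M" for u v k
    using hY[OF that, of k] hc[OF Ycl[OF that, of k]] by simp
  have Y'cl2: "Y' (\<phi> u) k (Y' (\<phi> v) k' (\<phi> w)) \<in> carrier M'" if "u \<in> carrier M" "v \<in> carrier M" "w \<in> carrier M" for u v w k k'
    using hY[OF that(2,3), of k'] Y'cl[OF that(1) Ycl[OF that(2,3), of k'], of k] by simp
  have Y'cl3: "Y' (Y' (\<phi> u) k (\<phi> v)) k' (\<phi> w) \<in> carrier M'" if "u \<in> carrier M" "v \<in> carrier M" "w \<in> carrier M" for u v w k k'
    using hY[OF that(1,2), of k] Y'cl[OF Ycl[OF that(1,2), of k] that(3), of k'] by simp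
  have lhs: "assoc_lhs M' Y' l (\<phi> u) (\<phi> v) (\<phi> w) a b = \<phi> (assoc_lhs M Y l u v w a b)"
    if uvw: "u \<in> carrier M" "v \<in> carrier M" "w \<in> carrier M" for l u v w a b
  proof -
    let ?J = "{j::nat. Y v (int j - b - 1) w \<noteq> \<zero>\<^bsub>M\<^esub>}"
    let ?J' = "{j::nat. Y' (\<phi> v) (int j - b - 1) (\<phi> w) \<noteq> \<zero>\<^bsub>M'\<^esub>}"
    let ?g = "\<lambda>j::nat. ((of_int (a + int j) :: complex) gchoose j) \<odot>\<^bsub>M'\<^esub>
                         Y' (\<phi> u) (int l - 1 - int j - a) (Y' (\<phi> v) (int j - b - 1) (\<phi> w))"
    have fin: "finite ?J" using nva_J_finite[OF nv uvw(2,3)] .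
    have sub: "?J' \<subseteq> ?J" using hY[OF uvw(2,3)] hz by (auto, metis)
    have "\<phi> (assoc_lhs M Y l u v w a b) = finsum M' (\<lambda>j. \<phi> (((of_int (a + int j) :: complex) gchoose j) \<odot>\<^bsub>M\<^esub>
                         Y u (int l - 1 - int j - a) (Y v (int j - b - 1) w))) ?J"
      unfolding assoc_lhs_def
      by (rule hom_finsum[OF m.module_axioms modM' hadd hz hc fin]) (auto intro!: Ycl uvw)
    also have "\<dots> = finsum M' ?g ?J"
      by (rule m'.add.finprod_cong') (auto simp: hsm hY Ycl uvw intro!: m'.smult_closed hc, metis Ycl hY hc uvw)
    also have "\<dots> = finsum M' ?g ?J'"
    proof (rule m'.add.finprod_mono_neutral_cong_left[symmetric])
      show "finite ?J" by (rule fin)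
      show "?J' \<subseteq> ?J" by (rule sub)
      show "?g \<in> ?J \<rightarrow> carrier M'" using Y'cl2 uvw by (auto intro!: m'.smult_closed simp del: m'.smult_closed) 
      fix j assume "j \<in> ?J - ?J'"
      thus "?g j = \<zero>\<^bsub>M'\<^esub>" using Y'0[OF uvw(1)] by simp
    qed simp
    finally show ?thesis unfolding assoc_lhs_def by simp
  qed
  have rhs: "assoc_rhs M' Y' l (\<phi> u) (\<phi> v) (\<phi> w) a b = \<phi> (assoc_rhs M Y l u v w a b)"
    if uvw: "u \<in> carrier M" "v \<in> carrier M" "w \<in> carrier M" for l u v w a b
  proof -
    have "\<phi> (assoc_rhs M Y l u v w a b) = finsum M' (\<lambda>i. \<phi> ((of_nat (l choose i) :: complex) \<odot>\<^bsub>M\<^esub>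
                         Y (Y u (int l - int i - 1 - a) v) (int i - b - 1) w)) {0..l}"
      unfolding assoc_rhs_def
      by (rule hom_finsum[OF m.module_axioms modM' hadd hz hc]) (auto intro!: Ycl uvw)
    also have "\<dots> = assoc_rhs M' Y' l (\<phi> u) (\<phi> v) (\<phi> w) a b"
      unfolding assoc_rhs_def
    proof (rule m'.add.finprod_cong')
      fix i assume "i \<in> {0..l}"
      show "\<phi> ((of_nat (l choose i) :: complex) \<odot>\<^bsub>M\<^esub> Y (Y u (int l - int i - 1 - a) v) (int i - b - 1) w) =
        (of_nat (l choose i) :: complex) \<odot>\<^bsub>M'\<^esub> Y' (Y' (\<phi> u) (int l - int i - 1 - a) (\<phi> v)) (int i - b - 1) (\<phi> w)"
        by (simp add: hsm Ycl uvw hY)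
    next
      show "(\<lambda>i. (of_nat (l choose i) :: complex) \<odot>\<^bsub>M'\<^esub> Y' (Y' (\<phi> u) (int l - int i - 1 - a) (\<phi> v)) (int i - b - 1) (\<phi> w)) \<in> {0..l} \<rightarrow> carrier M'"
        using Y'cl3[OF uvw] by (simp add: Pi_def)
    qed simp
    finally show ?thesis by simp
  qed
  show ?thesis unfolding nonlocal_va_def
  proof (intro conjI ballI allI)
    show "module CR M'" by (rule modM')
    show "\<phi> vac \<in> carrier M'" using nva_vac[OF nv] hc by blast
  next
    fix u' v' n assume a2: "u' \<in> carrier M'" "v' \<in> carrier M'"
    obtain u where u_def: "u \<in> carrier M" "u' = \<phi> u" using ex a2(1) by blast
    obtain v where v_def: "v \<in> carrier M" "v' = \<phi> v" using ex a2(2) by blast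
    note xy = u_def(1) v_def(1) u_def(2) v_def(2)
    from xy show "Y' u' n v' \<in> carrier M'" using Y'cl by simp
  next
    fix u' u'' v' n assume a3: "u' \<in> carrier M'" "u'' \<in> carrier M'" "v' \<in> carrier M'"
    obtain u where u_def: "u \<in> carrier M" "u' = \<phi> u" using ex a3(1) by blast
    obtain u2 where u2_def: "u2 \<in> carrier M" "u'' = \<phi> u2" using ex a3(2) by blast
    obtain v where v_def: "v \<in> carrier M" "v' = \<phi> v" using ex a3(3) by blast
    note uv = u_def(1) u2_def(1) v_def(1) u_def(2) u2_def(2) v_def(2)
    have "Y' (u' \<oplus>\<^bsub>M'\<^esub> u'') n v' = \<phi> (Y (u \<oplus>\<^bsub>M\<^esub> u2) n v)" using uv by (simp add: hadd hY)
    also have "\<dots> = \<phi> (Y u n v \<oplus>\<^bsub>M\<^esub> Y u2 n v)" using uv nva_add1[OF nv] by simp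
    also have "\<dots> = Y' u' n v' \<oplus>\<^bsub>M'\<^esub> Y' u'' n v'" using uv by (simp add: hadd hY Ycl)
    finally show "Y' (u' \<oplus>\<^bsub>M'\<^esub> u'') n v' = Y' u' n v' \<oplus>\<^bsub>M'\<^esub> Y' u'' n v'" .
  next
    fix c u' v' n assume a2: "u' \<in> carrier M'" "v' \<in> carrier M'"
    obtain u where u_def: "u \<in> carrier M" "u' = \<phi> u" using ex a2(1) by blast
    obtain v where v_def: "v \<in> carrier M" "v' = \<phi> v" using ex a2(2) by blast
    note uv = u_def(1) v_def(1) u_def(2) v_def(2)
    have "Y' (c \<odot>\<^bsub>M'\<^esub> u') n v' = \<phi> (Y (c \<odot>\<^bsub>M\<^esub> u) n v)" using uv by (simp add: hsm hY)
    also have "\<dots> = \<phi> (c \<odot>\<^bsub>M\<^esub> Y u n v)" using uv nva_sm1[OF nv] by simp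
    also have "\<dots> = c \<odot>\<^bsub>M'\<^esub> Y' u' n v'" using uv by (simp add: hsm hY Ycl)
    finally show "Y' (c \<odot>\<^bsub>M'\<^esub> u') n v' = c \<odot>\<^bsub>M'\<^esub> Y' u' n v'" .
  next
    fix u' v' v'' n assume a3: "u' \<in> carrier M'" "v' \<in> carrier M'" "v'' \<in> carrier M'"
    obtain u where u_def: "u \<in> carrier M" "u' = \<phi> u" using ex a3(1) by blast
    obtain v where v_def: "v \<in> carrier M" "v' = \<phi> v" using ex a3(2) by blast
    obtain v2 where v2_def: "v2 \<in> carrier M" "v'' = \<phi> v2" using ex a3(3) by blast
    note uv = u_def(1) v_def(1) v2_def(1) u_def(2) v_def(2) v2_def(2)
    have "Y' u' n (v' \<oplus>\<^bsub>M'\<^esub> v'') = \<phi> (Y u n (v \<oplus>\<^bsub>M\<^esub> v2))" using uv by (simp add: hadd hY)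
    also have "\<dots> = \<phi> (Y u n v \<oplus>\<^bsub>M\<^esub> Y u n v2)" using uv nva_add2[OF nv] by simp
    also have "\<dots> = Y' u' n v' \<oplus>\<^bsub>M'\<^esub> Y' u' n v''" using uv by (simp add: hadd hY Ycl)
    finally show "Y' u' n (v' \<oplus>\<^bsub>M'\<^esub> v'') = Y' u' n v' \<oplus>\<^bsub>M'\<^esub> Y' u' n v''" .
  next
    fix c u' v' n assume a2: "u' \<in> carrier M'" "v' \<in> carrier M'"
    obtain u where u_def: "u \<in> carrier M" "u' = \<phi> u" using ex a2(1) by blast
    obtain v where v_def: "v \<in> carrier M" "v' = \<phi> v" using ex a2(2) by blast
    note uv = u_def(1) v_def(1) u_def(2) v_def(2)
    have "Y' u' n (c \<odot>\<^bsub>M'\<^esub> v') = \<phi> (Y u n (c \<odot>\<^bsub>M\<^esub> v))" using uv by (simp add: hsm hY)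
    also have "\<dots> = \<phi> (c \<odot>\<^bsub>M\<^esub> Y u n v)" using uv nva_sm2[OF nv] by simp
    also have "\<dots> = c \<odot>\<^bsub>M'\<^esub> Y' u' n v'" using uv by (simp add: hsm hY Ycl)
    finally show "Y' u' n (c \<odot>\<^bsub>M'\<^esub> v') = c \<odot>\<^bsub>M'\<^esub> Y' u' n v'" .
  next
    fix u' v' assume a2: "u' \<in> carrier M'" "v' \<in> carrier M'"
    obtain u where u_def: "u \<in> carrier M" "u' = \<phi> u" using ex a2(1) by blast
    obtain v where v_def: "v \<in> carrier M" "v' = \<phi> v" using ex a2(2) by blast
    note uv = u_def(1) v_def(1) u_def(2) v_def(2)
    then obtain N where N: "\<forall>n\<ge>N. Y u n v = \<zero>\<^bsub>M\<^esub>" using nva_trunc[OF nv] by meson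
    show "\<exists>N. \<forall>n\<ge>N. Y' u' n v' = \<zero>\<^bsub>M'\<^esub>"
      by (rule exI[of _ N]) (use uv N hz in \<open>auto simp: hY[symmetric]\<close>)
  next
    fix v' n assume "v' \<in> carrier M'"
    then obtain v where v: "v \<in> carrier M" "v' = \<phi> v" using ex by blast
    have vc: "vac \<in> carrier M" using nva_vac[OF nv] .
    show "Y' (\<phi> vac) n v' = (if n = -1 then v' else \<zero>\<^bsub>M'\<^esub>)"
      using v vc nva_vacY[OF nv v(1), of n] hz by (simp add: hY[OF vc v(1), symmetric])
  next
    fix v' n assume "v' \<in> carrier M'"
    then obtain v where v: "v \<in> carrier M" "v' = \<phi> v" using ex by blast
    have vc: "vac \<in> carrier M" using nva_vac[OF nv] .
    show "0 \<le> n \<longrightarrow> Y' v' n (\<phi> vac) = \<zero>\<^bsub>M'\<^esub>"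
      using v vc nva_cre[OF nv v(1)] hz by (simp add: hY[OF v(1) vc, symmetric])
  next
    fix v' assume "v' \<in> carrier M'"
    then obtain v where v: "v \<in> carrier M" "v' = \<phi> v" using ex by blast
    have vc: "vac \<in> carrier M" using nva_vac[OF nv] .
    show "Y' v' (-1) (\<phi> vac) = v'"
      using v vc nva_cre1[OF nv v(1)] hz by (simp add: hY[OF v(1) vc, symmetric])
  next
    fix u' v' w' assume a3: "u' \<in> carrier M'" "v' \<in> carrier M'" "w' \<in> carrier M'"
    obtain u where u_def: "u \<in> carrier M" "u' = \<phi> u" using ex a3(1) by blast
    obtain v where v_def: "v \<in> carrier M" "v' = \<phi> v" using ex a3(2) by blast
    obtain w where w_def: "w \<in> carrier M" "w' = \<phi> w" using ex a3(3) by blast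
    note uvw = u_def(1) v_def(1) w_def(1)
    note e = u_def(2) v_def(2) w_def(2)
    obtain l where l: "\<forall>a b. assoc_lhs M Y l u v w a b = assoc_rhs M Y l u v w a b" using nva_assoc[OF nv uvw] by blast
    thus "\<exists>l. \<forall>a b. assoc_lhs M' Y' l u' v' w' a b = assoc_rhs M' Y' l u' v' w' a b"
      using l lhs[OF uvw] rhs[OF uvw] e by (intro exI[of _ l]) auto
  qed
qed



lemma mod_sm0: "module CR M \<Longrightarrow> x \<in> carrier M \<Longrightarrow> (0::complex) \<odot>\<^bsub>M\<^esub> x = \<zero>\<^bsub>M\<^esub>"
  using module.smult_l_null[of CR M x] by simp

lemma mod_smr0: "module CR M \<Longrightarrow> (c::complex) \<odot>\<^bsub>M\<^esub> \<zero>\<^bsub>M\<^esub> = \<zero>\<^bsub>M\<^esub>"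
  using module.smult_r_null[of CR M c] by simp

lemma mod_sm_ldistr: "module CR M \<Longrightarrow> x \<in> carrier M \<Longrightarrow> ((a::complex) + b) \<odot>\<^bsub>M\<^esub> x = a \<odot>\<^bsub>M\<^esub> x \<oplus>\<^bsub>M\<^esub> b \<odot>\<^bsub>M\<^esub> x"
  using module.smult_l_distr[of CR M a b x] by simp

lemma mod_sm_assoc: "module CR M \<Longrightarrow> x \<in> carrier M \<Longrightarrow> ((a::complex) * b) \<odot>\<^bsub>M\<^esub> x = a \<odot>\<^bsub>M\<^esub> (b \<odot>\<^bsub>M\<^esub> x)"
  using module.smult_assoc1[of CR M a b x] by simp

lemma mod_sm_one: "module CR M \<Longrightarrow> x \<in> carrier M \<Longrightarrow> (1::complex) \<odot>\<^bsub>M\<^esub> x = x"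
  using module.smult_one[of CR M x] by simp

lemma assoc_lhs_superset:
  assumes M: "module CR M"
  and Ycl: "\<And>u v k. u \<in> carrier M \<Longrightarrow> v \<in> carrier M \<Longrightarrow> Y u k v \<in> carrier M"
  and Y0: "\<And>k. Y u k \<zero>\<^bsub>M\<^esub> = \<zero>\<^bsub>M\<^esub>"
  and uvw: "u \<in> carrier M" "v \<in> carrier M" "w \<in> carrier M"
  and K: "finite K" "{j. Y v (int j - b - 1) w \<noteq> \<zero>\<^bsub>M\<^esub>} \<subseteq> K"
  shows "assoc_lhs M Y l u v w a b = finsum M (\<lambda>j. ((of_int (a + int j) :: complex) gchoose j) \<odot>\<^bsub>M\<^esub>
                         Y u (int l - 1 - int j - a) (Y v (int j - b - 1) w)) K"
proof -
  interpret m: module CR M by (rule M)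
  show ?thesis unfolding assoc_lhs_def
proof (rule m.add.finprod_mono_neutral_cong_left[OF K(1) K(2)])
  show "(\<lambda>j. ((of_int (a + int j) :: complex) gchoose j) \<odot>\<^bsub>M\<^esub> Y u (int l - 1 - int j - a) (Y v (int j - b - 1) w)) \<in> K \<rightarrow> carrier M"
    using uvw Ycl module.smult_closed[OF M] by (simp add: Pi_def)
  fix j assume "j \<in> K - {j. Y v (int j - b - 1) w \<noteq> \<zero>\<^bsub>M\<^esub>}"
  thus "((of_int (a + int j) :: complex) gchoose j) \<odot>\<^bsub>M\<^esub> Y u (int l - 1 - int j - a) (Y v (int j - b - 1) w) = \<zero>\<^bsub>M\<^esub>"
    using Y0 mod_smr0[OF M] by simp
qed simp
qed

lemma assoc_lhs_Suc:
  assumes nv: "nonlocal_va M vac Y" and uvw: "u \<in> carrier M" "v \<in> carrier M" "w \<in> carrier M"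
  shows "assoc_lhs M Y (Suc l) u v w a b = assoc_lhs M Y l u v w (a - 1) b \<oplus>\<^bsub>M\<^esub> assoc_lhs M Y l u v w a (b - 1)"
proof -
  interpret m: module CR M by (rule nva_module[OF nv])
  note Ycl = nva_Ycl[OF nv]
  obtain T where T: "\<forall>n\<ge>T. Y v n w = \<zero>\<^bsub>M\<^esub>" using nva_trunc[OF nv uvw(2,3)] by blast
  define N where "N = nat (T + b + 1)"
  have NN: "Y v (int j - b - 1) w = \<zero>\<^bsub>M\<^esub> \<and> Y v (int j - b) w = \<zero>\<^bsub>M\<^esub>" if "j \<ge> N" for j
  proof -
    have "int j \<ge> T + b + 1" using that unfolding N_def by linarith
    thus ?thesis using T by simp
  qed
  have Y0: "\<And>k. Y u k \<zero>\<^bsub>M\<^esub> = \<zero>\<^bsub>M\<^esub>" using nva_Y_zero_r[OF nv uvw(1)] .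
  define c :: "int \<Rightarrow> nat \<Rightarrow> complex" where "c = (\<lambda>a j. (of_int (a + int j) :: complex) gchoose j)"
  define A where "A = (\<lambda>j::nat. c a j \<odot>\<^bsub>M\<^esub> Y u (int l - int j - a) (Y v (int j - b - 1) w))"
  define B where "B = (\<lambda>j::nat. c (a - 1) j \<odot>\<^bsub>M\<^esub> Y u (int l - int j - a) (Y v (int j - b - 1) w))"
  define f where "f = (\<lambda>j::nat. if j = 0 then \<zero>\<^bsub>M\<^esub> else c a (j - 1) \<odot>\<^bsub>M\<^esub> Y u (int l - int j - a) (Y v (int j - b - 1) w))"
  have AC: "A \<in> {..Suc N} \<rightarrow> carrier M" "B \<in> {..Suc N} \<rightarrow> carrier M" "f \<in> {..Suc N} \<rightarrow> carrier M"
    unfolding A_def B_def f_def using uvw Ycl by (auto simp: Pi_def)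
  have sub: "{j. Y v (int j - b - 1) w \<noteq> \<zero>\<^bsub>M\<^esub>} \<subseteq> {..Suc N}"
  proof
    fix j assume "j \<in> {j. Y v (int j - b - 1) w \<noteq> \<zero>\<^bsub>M\<^esub>}"
    hence "\<not> N \<le> j" using NN by auto
    thus "j \<in> {..Suc N}" by simp
  qed
  have sub2: "{j. Y v (int j - (b - 1) - 1) w \<noteq> \<zero>\<^bsub>M\<^esub>} \<subseteq> {..N}"
  proof
    fix j assume "j \<in> {j. Y v (int j - (b - 1) - 1) w \<noteq> \<zero>\<^bsub>M\<^esub>}"
    hence "\<not> N \<le> j" using NN by auto
    thus "j \<in> {..N}" by simp
  qed
  have e1: "assoc_lhs M Y (Suc l) u v w a b = finsum M A {..Suc N}"
    unfolding A_def c_def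
    by (subst assoc_lhs_superset[OF m.module_axioms Ycl Y0 uvw _ sub]) (simp_all add: algebra_simps)
  have e2: "assoc_lhs M Y l u v w (a - 1) b = finsum M B {..Suc N}"
    unfolding B_def c_def
    by (subst assoc_lhs_superset[OF m.module_axioms Ycl Y0 uvw _ sub]) (simp_all add: algebra_simps)
  have "assoc_lhs M Y l u v w a (b - 1) = finsum M (\<lambda>i. f (Suc i)) {..N}"
    unfolding f_def c_def
    by (subst assoc_lhs_superset[OF m.module_axioms Ycl Y0 uvw _ sub2]) (simp_all add: algebra_simps)
  also have "\<dots> = finsum M f {..Suc N}"
  proof -
    have cl: "finsum M (\<lambda>i. f (Suc i)) {..N} \<in> carrier M" using AC by (intro m.finsum_closed) (auto simp: Pi_def)
    have f0: "f 0 = \<zero>\<^bsub>M\<^esub>" by (simp add: f_def)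
    have "finsum M f {..Suc N} = finsum M (\<lambda>i. f (Suc i)) {..N} \<oplus>\<^bsub>M\<^esub> f 0" by (rule m.finsum_Suc2[OF AC(3)])
    thus ?thesis using cl f0 by simp
  qed
  finally have e3: "assoc_lhs M Y l u v w a (b - 1) = finsum M f {..Suc N}" .
  have "finsum M A {..Suc N} = finsum M (\<lambda>j. B j \<oplus>\<^bsub>M\<^esub> f j) {..Suc N}"
  proof (rule m.finsum_cong')
    show "(\<lambda>j. B j \<oplus>\<^bsub>M\<^esub> f j) \<in> {..Suc N} \<rightarrow> carrier M" using AC by (auto simp: Pi_def)
    fix j assume "j \<in> {..Suc N}"
    show "A j = B j \<oplus>\<^bsub>M\<^esub> f j"
    proof (cases j)
      case 0
      thus ?thesis unfolding A_def B_def f_def c_def using uvw Ycl by simp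
    next
      case (Suc i)
      have cc: "c a j = c (a - 1) j + c a (j - 1)"
        unfolding c_def using gbinomial_Suc_Suc[of "of_int (a + int i) :: complex" i] Suc
        by (simp add: algebra_simps)
      show ?thesis unfolding A_def B_def f_def cc using Suc uvw Ycl
        by (simp add: mod_sm_ldistr[OF m.module_axioms])
    qed
  qed simp
  also have "\<dots> = finsum M B {..Suc N} \<oplus>\<^bsub>M\<^esub> finsum M f {..Suc N}"
    using AC by (simp add: m.finsum_addf)
  finally show ?thesis using e1 e2 e3 by simp
qed

lemma assoc_rhs_Suc:
  assumes nv: "nonlocal_va M vac Y" and uvw: "u \<in> carrier M" "v \<in> carrier M" "w \<in> carrier M"
  shows "assoc_rhs M Y (Suc l) u v w a b = assoc_rhs M Y l u v w (a - 1) b \<oplus>\<^bsub>M\<^esub> assoc_rhs M Y l u v w a (b - 1)"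
proof -
  interpret m: module CR M by (rule nva_module[OF nv])
  note Ycl = nva_Ycl[OF nv]
  define R where "R = (\<lambda>j::nat. Y (Y u (int l - int j - a) v) (int j - b - 1) w)"
  have Rc: "R j \<in> carrier M" for j unfolding R_def using uvw Ycl by simp
  define A where "A = (\<lambda>j::nat. (of_nat (Suc l choose j) :: complex) \<odot>\<^bsub>M\<^esub> R j)"
  define B where "B = (\<lambda>j::nat. (of_nat (l choose j) :: complex) \<odot>\<^bsub>M\<^esub> R j)"
  define f where "f = (\<lambda>j::nat. if j = 0 then \<zero>\<^bsub>M\<^esub> else (of_nat (l choose (j - 1)) :: complex) \<odot>\<^bsub>M\<^esub> R j)"
  have AC: "A \<in> {..Suc l} \<rightarrow> carrier M" "B \<in> {..Suc l} \<rightarrow> carrier M" "f \<in> {..Suc l} \<rightarrow> carrier M"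
    unfolding A_def B_def f_def using Rc by (auto simp: Pi_def)
  have e1: "assoc_rhs M Y (Suc l) u v w a b = finsum M A {..Suc l}"
    unfolding assoc_rhs_def A_def R_def by (simp add: atLeast0AtMost algebra_simps)
  have "assoc_rhs M Y l u v w (a - 1) b = finsum M B {..l}"
    unfolding assoc_rhs_def B_def R_def by (simp add: atLeast0AtMost algebra_simps)
  also have "\<dots> = finsum M B {..Suc l}"
  proof -
    have cl: "finsum M B {..l} \<in> carrier M" using AC by (intro m.finsum_closed) (auto simp: Pi_def)
    have "finsum M B {..Suc l} = B (Suc l) \<oplus>\<^bsub>M\<^esub> finsum M B {..l}" by (rule m.finsum_Suc[OF AC(2)])
    moreover have "B (Suc l) = \<zero>\<^bsub>M\<^esub>" unfolding B_def using mod_sm0[OF m.module_axioms Rc] binomial_eq_0[of l "Suc l"] by (simp del: binomial_eq_0_iff)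
    ultimately show ?thesis using cl by simp
  qed
  finally have e2: "assoc_rhs M Y l u v w (a - 1) b = finsum M B {..Suc l}" .
  have "assoc_rhs M Y l u v w a (b - 1) = finsum M (\<lambda>i. f (Suc i)) {..l}"
    unfolding assoc_rhs_def f_def R_def by (simp add: atLeast0AtMost algebra_simps)
  also have "\<dots> = finsum M f {..Suc l}"
  proof -
    have cl: "finsum M (\<lambda>i. f (Suc i)) {..l} \<in> carrier M" using AC by (intro m.finsum_closed) (auto simp: Pi_def)
    have f0: "f 0 = \<zero>\<^bsub>M\<^esub>" by (simp add: f_def)
    have "finsum M f {..Suc l} = finsum M (\<lambda>i. f (Suc i)) {..l} \<oplus>\<^bsub>M\<^esub> f 0" by (rule m.finsum_Suc2[OF AC(3)])
    thus ?thesis using cl f0 by simp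
  qed
  finally have e3: "assoc_rhs M Y l u v w a (b - 1) = finsum M f {..Suc l}" .
  have "finsum M A {..Suc l} = finsum M (\<lambda>j. B j \<oplus>\<^bsub>M\<^esub> f j) {..Suc l}"
  proof (rule m.finsum_cong')
    show "(\<lambda>j. B j \<oplus>\<^bsub>M\<^esub> f j) \<in> {..Suc l} \<rightarrow> carrier M" using AC by (auto simp: Pi_def)
    fix j assume "j \<in> {..Suc l}"
    show "A j = B j \<oplus>\<^bsub>M\<^esub> f j"
    proof (cases j)
      case 0
      thus ?thesis unfolding A_def B_def f_def using Rc by simp
    next
      case (Suc i)
      have "A j = (of_nat (l choose j) :: complex) \<odot>\<^bsub>M\<^esub> R j \<oplus>\<^bsub>M\<^esub> (of_nat (l choose i) :: complex) \<odot>\<^bsub>M\<^esub> R j"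
        unfolding A_def using Suc mod_sm_ldistr[OF m.module_axioms Rc] by (simp add: m.add.m_comm Rc)
      thus ?thesis unfolding B_def f_def using Suc by simp
    qed
  qed simp
  also have "\<dots> = finsum M B {..Suc l} \<oplus>\<^bsub>M\<^esub> finsum M f {..Suc l}"
    using AC by (simp add: m.finsum_addf)
  finally show ?thesis using e1 e2 e3 by simp
qed

lemma assoc_mono:
  assumes nv: "nonlocal_va M vac Y" and uvw: "u \<in> carrier M" "v \<in> carrier M" "w \<in> carrier M"
  and eq: "\<forall>a b. assoc_lhs M Y l u v w a b = assoc_rhs M Y l u v w a b"
  and le: "l \<le> l'"
  shows "\<forall>a b. assoc_lhs M Y l' u v w a b = assoc_rhs M Y l' u v w a b"
proof -
  have "\<forall>a b. assoc_lhs M Y (l + d) u v w a b = assoc_rhs M Y (l + d) u v w a b" for d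
  proof (induct d)
    case 0 thus ?case using eq by simp
  next
    case (Suc d)
    thus ?case using assoc_lhs_Suc[OF nv uvw, of "l + d"] assoc_rhs_Suc[OF nv uvw, of "l + d"] by simp
  qed
  from this[of "l' - l"] show ?thesis using le by simp
qed



lemma assoc_zero_w:
  assumes nv: "nonlocal_va M vac Y" and uv: "u \<in> carrier M" "v \<in> carrier M"
  shows "assoc_lhs M Y l u v \<zero>\<^bsub>M\<^esub> a b = \<zero>\<^bsub>M\<^esub>" "assoc_rhs M Y l u v \<zero>\<^bsub>M\<^esub> a b = \<zero>\<^bsub>M\<^esub>"
proof -
  interpret m: module CR M by (rule nva_module[OF nv])
  show "assoc_lhs M Y l u v \<zero>\<^bsub>M\<^esub> a b = \<zero>\<^bsub>M\<^esub>"
    unfolding assoc_lhs_def using nva_Y_zero_r[OF nv uv(2)] by simp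
  show "assoc_rhs M Y l u v \<zero>\<^bsub>M\<^esub> a b = \<zero>\<^bsub>M\<^esub>"
    unfolding assoc_rhs_def using nva_Y_zero_r[OF nv] nva_Ycl[OF nv] uv mod_smr0[OF m.module_axioms]
    by (simp add: m.finsum_zero)
qed

lemma (in abelian_monoid) finsum_swap:
  assumes "finite A" "finite B" "\<And>i j. i \<in> A \<Longrightarrow> j \<in> B \<Longrightarrow> f i j \<in> carrier G"
  shows "(\<Oplus>i\<in>A. \<Oplus>j\<in>B. f i j) = (\<Oplus>j\<in>B. \<Oplus>i\<in>A. f i j)"
  using assms(1,3)
proof (induct A rule: finite_induct)
  case empty
  then show ?case by (simp add: finsum_zero)
next
  case (insert x F)
  have "(\<Oplus>i\<in>insert x F. \<Oplus>j\<in>B. f i j) = (\<Oplus>j\<in>B. f x j) \<oplus> (\<Oplus>i\<in>F. \<Oplus>j\<in>B. f i j)"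
    using insert by (intro finsum_insert) (auto intro!: finsum_closed)
  also have "\<dots> = (\<Oplus>j\<in>B. f x j) \<oplus> (\<Oplus>j\<in>B. \<Oplus>i\<in>F. f i j)" using insert by simp
  also have "\<dots> = (\<Oplus>j\<in>B. f x j \<oplus> (\<Oplus>i\<in>F. f i j))"
    using insert by (intro finsum_addf[symmetric]) (auto intro!: finsum_closed)
  also have "\<dots> = (\<Oplus>j\<in>B. \<Oplus>i\<in>insert x F. f i j)"
    using insert by (intro finsum_cong') (auto intro!: finsum_closed simp: finsum_insert)
  finally show ?case .
qed

locale filt =
  fixes V :: "(complex,'v) module" and vac :: 'v and Y :: "'v vop" and F :: "int \<Rightarrow> 'v set"
  assumes nva: "nonlocal_va V vac Y"
    and subsp: "\<And>n. submodule (F n) CR V"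
    and incr: "\<And>n. F n \<subseteq> F (n + 1)"
    and vac_F0: "vac \<in> F 0"
    and compat: "\<And>a b k m n. a \<in> F k \<Longrightarrow> b \<in> F n \<Longrightarrow> Y a m b \<in> F (k + n - m - 1)"
begin

sublocale m: module CR V by (rule nva_module[OF nva])

lemmas Ycl = nva_Ycl[OF nva]
lemmas Y0r = nva_Y_zero_r[OF nva]
lemmas Y0l = nva_Y_zero_l[OF nva]

lemma F_sub: "F n \<subseteq> carrier V" using m.submoduleE(1)[OF subsp] .
lemma F_zero: "\<zero>\<^bsub>V\<^esub> \<in> F n" using subsp[of n] by (simp add: submodule_def subgroup_def)
lemma F_add: "x \<in> F n \<Longrightarrow> y \<in> F n \<Longrightarrow> x \<oplus>\<^bsub>V\<^esub> y \<in> F n" using m.submoduleE(5)[OF subsp] by blast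
lemma F_smult: "x \<in> F n \<Longrightarrow> (c::complex) \<odot>\<^bsub>V\<^esub> x \<in> F n" using m.submoduleE(4)[OF subsp, of c] by simp
lemma F_neg: "x \<in> F n \<Longrightarrow> \<ominus>\<^bsub>V\<^esub> x \<in> F n" using m.submoduleE(3)[OF subsp] by blast
lemma F_minus: "x \<in> F n \<Longrightarrow> y \<in> F n \<Longrightarrow> x \<ominus>\<^bsub>V\<^esub> y \<in> F n" unfolding a_minus_def using F_add F_neg by blast
lemma F_carr: "x \<in> F n \<Longrightarrow> x \<in> carrier V" using F_sub by blast

lemma F_mono: "i \<le> j \<Longrightarrow> F i \<subseteq> F j"
proof -
  assume "i \<le> j"
  have "F i \<subseteq> F (i + int d)" for d
    by (induct d) (simp, metis (no_types) incr of_nat_Suc add.assoc add.commute subset_trans)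
  from this[of "nat (j - i)"] \<open>i \<le> j\<close> show ?thesis by simp
qed

lemma F_finsum: "finite A \<Longrightarrow> (\<And>i. i \<in> A \<Longrightarrow> f i \<in> F n) \<Longrightarrow> finsum V f A \<in> F n"
proof (induct A rule: finite_induct)
  case empty then show ?case using F_zero by simp
next
  case (insert x A)
  have "finsum V f (insert x A) = f x \<oplus>\<^bsub>V\<^esub> finsum V f A"
    using insert F_carr by (intro m.finsum_insert) (auto simp: Pi_def)
  thus ?case using insert F_add by simp
qed

lemma Y_finsum_r:
  assumes "finite A" "u \<in> carrier V" "\<And>i. i \<in> A \<Longrightarrow> f i \<in> carrier V"
  shows "Y u k (finsum V f A) = finsum V (\<lambda>i. Y u k (f i)) A"
  using assms(1,3)
proof (induct A rule: finite_induct)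
  case empty then show ?case using Y0r[OF assms(2)] by simp
next
  case (insert x A)
  have "Y u k (finsum V f (insert x A)) = Y u k (f x \<oplus>\<^bsub>V\<^esub> finsum V f A)"
    using insert by (subst m.finsum_insert) (auto simp: Pi_def)
  also have "\<dots> = Y u k (f x) \<oplus>\<^bsub>V\<^esub> Y u k (finsum V f A)"
    using insert assms(2) by (intro nva_add2[OF nva]) (auto intro!: m.finsum_closed)
  also have "\<dots> = finsum V (\<lambda>i. Y u k (f i)) (insert x A)"
    using insert assms(2) Ycl by (subst m.finsum_insert) (auto simp: Pi_def)
  finally show ?case .
qed

lemma Y_finsum_l:
  assumes "finite A" "w \<in> carrier V" "\<And>i. i \<in> A \<Longrightarrow> f i \<in> carrier V"
  shows "Y (finsum V f A) k w = finsum V (\<lambda>i. Y (f i) k w) A"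
  using assms(1,3)
proof (induct A rule: finite_induct)
  case empty then show ?case using Y0l[OF assms(2)] by simp
next
  case (insert x A)
  have "Y (finsum V f (insert x A)) k w = Y (f x \<oplus>\<^bsub>V\<^esub> finsum V f A) k w"
    using insert by (subst m.finsum_insert) (auto simp: Pi_def)
  also have "\<dots> = Y (f x) k w \<oplus>\<^bsub>V\<^esub> Y (finsum V f A) k w"
    using insert assms(2) by (intro nva_add1[OF nva]) (auto intro!: m.finsum_closed)
  also have "\<dots> = finsum V (\<lambda>i. Y (f i) k w) (insert x A)"
    using insert assms(2) Ycl by (subst m.finsum_insert) (auto simp: Pi_def)
  finally show ?case .
qed

definition supp :: "(int \<Rightarrow> 'v) \<Rightarrow> int set" where "supp x = {n. x n \<noteq> \<zero>\<^bsub>V\<^esub>}"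

definition RF :: "(int \<Rightarrow> 'v) set" where "RF = {x. (\<forall>n. x n \<in> F n) \<and> finite (supp x)}"

definition W :: "(complex, int \<Rightarrow> 'v) module" where
  "W = \<lparr>carrier = RF, mult = (\<lambda>_ _ _. \<zero>\<^bsub>V\<^esub>), one = (\<lambda>_. \<zero>\<^bsub>V\<^esub>), zero = (\<lambda>_. \<zero>\<^bsub>V\<^esub>),
        add = (\<lambda>x y n. x n \<oplus>\<^bsub>V\<^esub> y n), smult = (\<lambda>c x n. c \<odot>\<^bsub>V\<^esub> x n)\<rparr>"

lemma W_simps[simp]: "carrier W = RF" "x \<oplus>\<^bsub>W\<^esub> y = (\<lambda>n. x n \<oplus>\<^bsub>V\<^esub> y n)"
  "c \<odot>\<^bsub>W\<^esub> x = (\<lambda>n. c \<odot>\<^bsub>V\<^esub> x n)" "\<zero>\<^bsub>W\<^esub> = (\<lambda>_. \<zero>\<^bsub>V\<^esub>)"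
  by (simp_all add: W_def)

lemma RF_F: "x \<in> RF \<Longrightarrow> x n \<in> F n" by (simp add: RF_def)
lemma RF_carr: "x \<in> RF \<Longrightarrow> x n \<in> carrier V" using RF_F F_carr by blast
lemma RF_fin: "x \<in> RF \<Longrightarrow> finite (supp x)" by (simp add: RF_def)
lemma RF_I: "(\<And>n. x n \<in> F n) \<Longrightarrow> finite (supp x) \<Longrightarrow> x \<in> RF" by (simp add: RF_def)
lemma supp_iff: "n \<notin> supp x \<longleftrightarrow> x n = \<zero>\<^bsub>V\<^esub>" by (simp add: supp_def)

lemma RF_add: "x \<in> RF \<Longrightarrow> y \<in> RF \<Longrightarrow> (\<lambda>n. x n \<oplus>\<^bsub>V\<^esub> y n) \<in> RF"
proof (rule RF_I)
  assume xy: "x \<in> RF" "y \<in> RF"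
  show "x n \<oplus>\<^bsub>V\<^esub> y n \<in> F n" for n using xy RF_F F_add by blast
  have "supp (\<lambda>n. x n \<oplus>\<^bsub>V\<^esub> y n) \<subseteq> supp x \<union> supp y" unfolding supp_def by auto
  thus "finite (supp (\<lambda>n. x n \<oplus>\<^bsub>V\<^esub> y n))" using xy RF_fin finite_subset by blast
qed

lemma RF_smult: "x \<in> RF \<Longrightarrow> (\<lambda>n. (c::complex) \<odot>\<^bsub>V\<^esub> x n) \<in> RF"
proof (rule RF_I)
  assume x: "x \<in> RF"
  show "c \<odot>\<^bsub>V\<^esub> x n \<in> F n" for n using x RF_F F_smult by blast
  have "supp (\<lambda>n. c \<odot>\<^bsub>V\<^esub> x n) \<subseteq> supp x" unfolding supp_def using mod_smr0[OF m.module_axioms] by auto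
  thus "finite (supp (\<lambda>n. c \<odot>\<^bsub>V\<^esub> x n))" using x RF_fin finite_subset by blast
qed

lemma RF_neg: "x \<in> RF \<Longrightarrow> (\<lambda>n. \<ominus>\<^bsub>V\<^esub> x n) \<in> RF"
proof (rule RF_I)
  assume x: "x \<in> RF"
  show "\<ominus>\<^bsub>V\<^esub> x n \<in> F n" for n using x RF_F F_neg by blast
  have "supp (\<lambda>n. \<ominus>\<^bsub>V\<^esub> x n) \<subseteq> supp x" unfolding supp_def by auto
  thus "finite (supp (\<lambda>n. \<ominus>\<^bsub>V\<^esub> x n))" using x RF_fin finite_subset by blast
qed

lemma RF_zero: "(\<lambda>_. \<zero>\<^bsub>V\<^esub>) \<in> RF"
  by (rule RF_I) (simp_all add: F_zero supp_def)

lemma W_module: "module CR W"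
proof (rule moduleI)
  show "cring CR" using m.is_cring .
  show "abelian_group W"
  proof (rule abelian_groupI)
    fix x y assume "x \<in> carrier W" "y \<in> carrier W"
    thus "x \<oplus>\<^bsub>W\<^esub> y \<in> carrier W" using RF_add by simp
    show "x \<oplus>\<^bsub>W\<^esub> y = y \<oplus>\<^bsub>W\<^esub> x" using \<open>x \<in> carrier W\<close> \<open>y \<in> carrier W\<close> RF_carr
      by (auto simp: m.add.m_comm)
  next
    show "\<zero>\<^bsub>W\<^esub> \<in> carrier W" using RF_zero by simp
  next
    fix x y z assume "x \<in> carrier W" "y \<in> carrier W" "z \<in> carrier W"
    thus "x \<oplus>\<^bsub>W\<^esub> y \<oplus>\<^bsub>W\<^esub> z = x \<oplus>\<^bsub>W\<^esub> (y \<oplus>\<^bsub>W\<^esub> z)" using RF_carr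
      by (auto simp: m.add.m_assoc)
  next
    fix x assume x: "x \<in> carrier W"
    thus "\<zero>\<^bsub>W\<^esub> \<oplus>\<^bsub>W\<^esub> x = x" using RF_carr by auto
    have "(\<lambda>n. \<ominus>\<^bsub>V\<^esub> x n) \<oplus>\<^bsub>W\<^esub> x = \<zero>\<^bsub>W\<^esub>" using x RF_carr by (auto simp: m.l_neg)
    thus "\<exists>y\<in>carrier W. y \<oplus>\<^bsub>W\<^esub> x = \<zero>\<^bsub>W\<^esub>" using RF_neg x by auto
  qed
next
  fix a x assume "x \<in> carrier W"
  thus "a \<odot>\<^bsub>W\<^esub> x \<in> carrier W" using RF_smult by simp
next
  fix a b x assume x: "x \<in> carrier W"
  thus "(a \<oplus>\<^bsub>CR\<^esub> b) \<odot>\<^bsub>W\<^esub> x = a \<odot>\<^bsub>W\<^esub> x \<oplus>\<^bsub>W\<^esub> b \<odot>\<^bsub>W\<^esub> x"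
    using RF_carr by (auto simp: mod_sm_ldistr[OF m.module_axioms])
  show "(a \<otimes>\<^bsub>CR\<^esub> b) \<odot>\<^bsub>W\<^esub> x = a \<odot>\<^bsub>W\<^esub> (b \<odot>\<^bsub>W\<^esub> x)"
    using x RF_carr by (auto simp: mod_sm_assoc[OF m.module_axioms])
  show "\<one>\<^bsub>CR\<^esub> \<odot>\<^bsub>W\<^esub> x = x" using x RF_carr by (auto simp: mod_sm_one[OF m.module_axioms])
next
  fix a x y assume "x \<in> carrier W" "y \<in> carrier W"
  thus "a \<odot>\<^bsub>W\<^esub> (x \<oplus>\<^bsub>W\<^esub> y) = a \<odot>\<^bsub>W\<^esub> x \<oplus>\<^bsub>W\<^esub> a \<odot>\<^bsub>W\<^esub> y"
    using RF_carr by (auto simp: m.smult_r_distr)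
qed

sublocale w: module CR W by (rule W_module)

lemma W_finsum: "finite A \<Longrightarrow> (\<And>i. i \<in> A \<Longrightarrow> f i \<in> RF) \<Longrightarrow> finsum W f A = (\<lambda>D. finsum V (\<lambda>i. f i D) A)"
proof (induct A rule: finite_induct)
  case empty then show ?case by simp
next
  case (insert x A)
  have "finsum W f (insert x A) = f x \<oplus>\<^bsub>W\<^esub> finsum W f A"
    using insert by (intro w.finsum_insert) (auto simp: Pi_def)
  also have "\<dots> = (\<lambda>D. f x D \<oplus>\<^bsub>V\<^esub> finsum V (\<lambda>i. f i D) A)" using insert by simp
  also have "\<dots> = (\<lambda>D. finsum V (\<lambda>i. f i D) (insert x A))"
    using insert RF_carr by (subst m.finsum_insert) (auto simp: Pi_def)
  finally show ?case .
qed

end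


context filt begin

definition pY :: "(int \<Rightarrow> 'v) vop" where
  "pY x k y = (\<lambda>D. finsum V (\<lambda>m. Y (x m) k (y (D - m + k + 1))) (supp x))"

lemma pY_sup:
  assumes x: "x \<in> RF" and y: "y \<in> RF" and A: "finite A" "supp x \<subseteq> A"
  shows "pY x k y D = finsum V (\<lambda>m. Y (x m) k (y (D - m + k + 1))) A"
  unfolding pY_def
proof (rule m.add.finprod_mono_neutral_cong_left[OF A])
  show "(\<lambda>m. Y (x m) k (y (D - m + k + 1))) \<in> A \<rightarrow> carrier V"
    using x y RF_carr Ycl by (simp add: Pi_def)
  fix i assume "i \<in> A - supp x"
  hence "x i = \<zero>\<^bsub>V\<^esub>" by (simp add: supp_iff)
  thus "Y (x i) k (y (D - i + k + 1)) = \<zero>\<^bsub>V\<^esub>" using Y0l y RF_carr by simp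
qed simp

lemma finsum_zero_cong: "(\<And>i. i \<in> A \<Longrightarrow> f i = \<zero>\<^bsub>V\<^esub>) \<Longrightarrow> finsum V f A = \<zero>\<^bsub>V\<^esub>"
proof -
  assume h: "\<And>i. i \<in> A \<Longrightarrow> f i = \<zero>\<^bsub>V\<^esub>"
  have "finsum V f A = finsum V (\<lambda>i. \<zero>\<^bsub>V\<^esub>) A"
  proof (cases "finite A")
    case True thus ?thesis using h by (intro m.finsum_cong') (auto simp: Pi_def)
  qed simp
  thus ?thesis by simp
qed

lemma pY_F:
  assumes x: "x \<in> RF" and y: "y \<in> RF"
  shows "pY x k y D \<in> F D"
  unfolding pY_def
proof (rule F_finsum)
  show "finite (supp x)" using RF_fin[OF x] .
  fix m assume "m \<in> supp x"
  have "Y (x m) k (y (D - m + k + 1)) \<in> F (m + (D - m + k + 1) - k - 1)"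
    using compat RF_F x y by blast
  thus "Y (x m) k (y (D - m + k + 1)) \<in> F D" by simp
qed

lemma pY_supp:
  assumes x: "x \<in> RF" and y: "y \<in> RF"
  shows "supp (pY x k y) \<subseteq> (\<lambda>(m,n). m + n - k - 1) ` (supp x \<times> supp y)"
proof
  fix D assume D: "D \<in> supp (pY x k y)"
  show "D \<in> (\<lambda>(m,n). m + n - k - 1) ` (supp x \<times> supp y)"
  proof (rule ccontr)
    assume nD: "D \<notin> (\<lambda>(m,n). m + n - k - 1) ` (supp x \<times> supp y)"
    have "pY x k y D = \<zero>\<^bsub>V\<^esub>" unfolding pY_def
    proof (rule finsum_zero_cong)
      fix m assume m: "m \<in> supp x"
      have "D - m + k + 1 \<notin> supp y"
      proof
        assume "D - m + k + 1 \<in> supp y"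
        hence "(m, D - m + k + 1) \<in> supp x \<times> supp y" using m by simp
        hence "m + (D - m + k + 1) - k - 1 \<in> (\<lambda>(m,n). m + n - k - 1) ` (supp x \<times> supp y)" by force
        thus False using nD by simp
      qed
      thus "Y (x m) k (y (D - m + k + 1)) = \<zero>\<^bsub>V\<^esub>" using Y0r x RF_carr by (simp add: supp_iff)
    qed
    thus False using D by (simp add: supp_def)
  qed
qed

lemma pY_RF: "x \<in> RF \<Longrightarrow> y \<in> RF \<Longrightarrow> pY x k y \<in> RF"
proof (rule RF_I)
  assume xy: "x \<in> RF" "y \<in> RF"
  show "pY x k y n \<in> F n" for n using pY_F[OF xy] .
  have "finite ((\<lambda>(m,n). m + n - k - 1) ` (supp x \<times> supp y))"
    using RF_fin xy by (intro finite_imageI finite_cartesian_product) auto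
  thus "finite (supp (pY x k y))" using pY_supp[OF xy] finite_subset by blast
qed

lemma pY_carr: "x \<in> RF \<Longrightarrow> y \<in> RF \<Longrightarrow> pY x k y D \<in> carrier V"
  using pY_RF RF_carr by blast

lemma pY_add1:
  assumes x: "x \<in> RF" and x': "x' \<in> RF" and y: "y \<in> RF"
  shows "pY (\<lambda>n. x n \<oplus>\<^bsub>V\<^esub> x' n) k y = (\<lambda>D. pY x k y D \<oplus>\<^bsub>V\<^esub> pY x' k y D)"
proof
  fix D
  let ?A = "supp x \<union> supp x'"
  have fA: "finite ?A" using RF_fin x x' by simp
  have s: "supp (\<lambda>n. x n \<oplus>\<^bsub>V\<^esub> x' n) \<subseteq> ?A" unfolding supp_def by auto
  have "pY (\<lambda>n. x n \<oplus>\<^bsub>V\<^esub> x' n) k y D = finsum V (\<lambda>m. Y (x m \<oplus>\<^bsub>V\<^esub> x' m) k (y (D - m + k + 1))) ?A"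
    using pY_sup[OF RF_add[OF x x'] y fA s] .
  also have "\<dots> = finsum V (\<lambda>m. Y (x m) k (y (D - m + k + 1)) \<oplus>\<^bsub>V\<^esub> Y (x' m) k (y (D - m + k + 1))) ?A"
    using x x' y RF_carr Ycl by (intro m.finsum_cong') (auto simp: nva_add1[OF nva] Pi_def)
  also have "\<dots> = pY x k y D \<oplus>\<^bsub>V\<^esub> pY x' k y D"
    using x x' y RF_carr Ycl pY_sup[OF x y fA] pY_sup[OF x' y fA] by (simp add: m.finsum_addf Pi_def)
  finally show "pY (\<lambda>n. x n \<oplus>\<^bsub>V\<^esub> x' n) k y D = pY x k y D \<oplus>\<^bsub>V\<^esub> pY x' k y D" .
qed

lemma pY_sm1:
  assumes x: "x \<in> RF" and y: "y \<in> RF"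
  shows "pY (\<lambda>n. c \<odot>\<^bsub>V\<^esub> x n) k y = (\<lambda>D. c \<odot>\<^bsub>V\<^esub> pY x k y D)"
proof
  fix D
  have fA: "finite (supp x)" using RF_fin x by simp
  have s: "supp (\<lambda>n. c \<odot>\<^bsub>V\<^esub> x n) \<subseteq> supp x" unfolding supp_def using mod_smr0[OF m.module_axioms] by auto
  have "pY (\<lambda>n. c \<odot>\<^bsub>V\<^esub> x n) k y D = finsum V (\<lambda>m. Y (c \<odot>\<^bsub>V\<^esub> x m) k (y (D - m + k + 1))) (supp x)"
    using pY_sup[OF RF_smult[OF x] y fA s] .
  also have "\<dots> = finsum V (\<lambda>m. c \<odot>\<^bsub>V\<^esub> Y (x m) k (y (D - m + k + 1))) (supp x)"
    using x y RF_carr Ycl by (intro m.finsum_cong') (auto simp: nva_sm1[OF nva] Pi_def)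
  also have "\<dots> = c \<odot>\<^bsub>V\<^esub> pY x k y D"
    unfolding pY_def using x y RF_carr Ycl fA by (subst m.finsum_smult_ldistr) (auto simp: Pi_def)
  finally show "pY (\<lambda>n. c \<odot>\<^bsub>V\<^esub> x n) k y D = c \<odot>\<^bsub>V\<^esub> pY x k y D" .
qed

lemma pY_add2:
  assumes x: "x \<in> RF" and y: "y \<in> RF" and y': "y' \<in> RF"
  shows "pY x k (\<lambda>n. y n \<oplus>\<^bsub>V\<^esub> y' n) = (\<lambda>D. pY x k y D \<oplus>\<^bsub>V\<^esub> pY x k y' D)"
proof
  fix D
  have "pY x k (\<lambda>n. y n \<oplus>\<^bsub>V\<^esub> y' n) D = finsum V (\<lambda>m. Y (x m) k (y (D - m + k + 1)) \<oplus>\<^bsub>V\<^esub> Y (x m) k (y' (D - m + k + 1))) (supp x)"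
    unfolding pY_def using x y y' RF_carr Ycl by (intro m.finsum_cong') (auto simp: nva_add2[OF nva] Pi_def)
  also have "\<dots> = pY x k y D \<oplus>\<^bsub>V\<^esub> pY x k y' D"
    unfolding pY_def using x y y' RF_carr Ycl by (simp add: m.finsum_addf Pi_def)
  finally show "pY x k (\<lambda>n. y n \<oplus>\<^bsub>V\<^esub> y' n) D = pY x k y D \<oplus>\<^bsub>V\<^esub> pY x k y' D" .
qed

lemma pY_sm2:
  assumes x: "x \<in> RF" and y: "y \<in> RF"
  shows "pY x k (\<lambda>n. c \<odot>\<^bsub>V\<^esub> y n) = (\<lambda>D. c \<odot>\<^bsub>V\<^esub> pY x k y D)"
proof
  fix D
  have fA: "finite (supp x)" using RF_fin x by simp
  have "pY x k (\<lambda>n. c \<odot>\<^bsub>V\<^esub> y n) D = finsum V (\<lambda>m. c \<odot>\<^bsub>V\<^esub> Y (x m) k (y (D - m + k + 1))) (supp x)"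
    unfolding pY_def using x y RF_carr Ycl by (intro m.finsum_cong') (auto simp: nva_sm2[OF nva] Pi_def)
  also have "\<dots> = c \<odot>\<^bsub>V\<^esub> pY x k y D"
    unfolding pY_def using x y RF_carr Ycl fA by (subst m.finsum_smult_ldistr) (auto simp: Pi_def)
  finally show "pY x k (\<lambda>n. c \<odot>\<^bsub>V\<^esub> y n) D = c \<odot>\<^bsub>V\<^esub> pY x k y D" .
qed

lemma finite_bound:
  assumes "finite S" "\<And>s. s \<in> S \<Longrightarrow> \<exists>N::int. \<forall>n\<ge>N. P s n"
  shows "\<exists>N. \<forall>s\<in>S. \<forall>n\<ge>N. P s n"
  using assms
proof (induct S rule: finite_induct)
  case empty then show ?case by simp
next
  case (insert x S)
  then obtain N1 where N1: "\<forall>s\<in>S. \<forall>n\<ge>N1. P s n" by blast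
  obtain N2 where N2: "\<forall>n\<ge>N2. P x n" using insert by blast
  show ?case by (rule exI[of _ "max N1 N2"]) (use N1 N2 in auto)
qed

lemma pY_trunc:
  assumes x: "x \<in> RF" and y: "y \<in> RF"
  shows "\<exists>N. \<forall>k\<ge>N. pY x k y = (\<lambda>_. \<zero>\<^bsub>V\<^esub>)"
proof -
  have fin: "finite (supp x \<times> supp y)" using RF_fin x y by simp
  obtain N where N: "\<forall>s\<in>supp x \<times> supp y. \<forall>k\<ge>N. Y (x (fst s)) k (y (snd s)) = \<zero>\<^bsub>V\<^esub>"
    using finite_bound[OF fin, of "\<lambda>s k. Y (x (fst s)) k (y (snd s)) = \<zero>\<^bsub>V\<^esub>"]
      nva_trunc[OF nva] x y RF_carr by blast
  show ?thesis
  proof (intro exI allI impI ext)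
    fix k D assume k: "N \<le> k"
    show "pY x k y D = \<zero>\<^bsub>V\<^esub>" unfolding pY_def
    proof (rule finsum_zero_cong)
      fix m assume m: "m \<in> supp x"
      show "Y (x m) k (y (D - m + k + 1)) = \<zero>\<^bsub>V\<^esub>"
      proof (cases "D - m + k + 1 \<in> supp y")
        case True thus ?thesis using N m k by force
      next
        case False thus ?thesis using Y0r x RF_carr by (simp add: supp_iff)
      qed
    qed
  qed
qed

definition dl :: "int \<Rightarrow> 'v \<Rightarrow> int \<Rightarrow> 'v" where "dl n a = (\<lambda>m. if m = n then a else \<zero>\<^bsub>V\<^esub>)"

lemma dl_RF: "a \<in> F n \<Longrightarrow> dl n a \<in> RF"
proof (rule RF_I)
  assume a: "a \<in> F n"
  show "dl n a m \<in> F m" for m using a F_zero by (simp add: dl_def)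
  have "supp (dl n a) \<subseteq> {n}" by (auto simp: supp_def dl_def)
  thus "finite (supp (dl n a))" using finite_subset by blast
qed

lemma supp_dl: "supp (dl n a) \<subseteq> {n}" by (auto simp: supp_def dl_def)

lemma finsum_single: "f a \<in> carrier V \<Longrightarrow> finsum V f {a} = f a"
  by simp

lemma pY_dl1:
  assumes a: "a \<in> F n" and y: "y \<in> RF"
  shows "pY (dl n a) k y D = Y a k (y (D - n + k + 1))"
  using pY_sup[OF dl_RF[OF a] y _ supp_dl] a y F_carr RF_carr Ycl by (simp add: dl_def)

lemma pY_vac: "y \<in> RF \<Longrightarrow> pY (dl 0 vac) k y = (if k = -1 then y else (\<lambda>_. \<zero>\<^bsub>V\<^esub>))"
  using pY_dl1[OF vac_F0] nva_vacY[OF nva] RF_carr by (auto intro!: ext)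

lemma pY_cre:
  assumes x: "x \<in> RF"
  shows "k \<ge> 0 \<Longrightarrow> pY x k (dl 0 vac) = (\<lambda>_. \<zero>\<^bsub>V\<^esub>)" and "pY x (-1) (dl 0 vac) = x"
proof -
  assume k: "k \<ge> 0"
  show "pY x k (dl 0 vac) = (\<lambda>_. \<zero>\<^bsub>V\<^esub>)" unfolding pY_def
    by (intro ext finsum_zero_cong)
       (use x k RF_carr nva_cre[OF nva] Y0r in \<open>auto simp: dl_def\<close>)
next
  show "pY x (-1) (dl 0 vac) = x"
  proof
    fix D
    have "pY x (-1) (dl 0 vac) D = finsum V (\<lambda>m. Y (x m) (-1) (dl 0 vac (D - m + -1 + 1))) (insert D (supp x))"
      using RF_fin[OF x] by (intro pY_sup[OF x dl_RF[OF vac_F0]]) auto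
    also have "\<dots> = finsum V (\<lambda>m. if D = m then x m else \<zero>\<^bsub>V\<^esub>) (insert D (supp x))"
    proof (rule m.finsum_cong')
      fix m
      show "Y (x m) (-1) (dl 0 vac (D - m + -1 + 1)) = (if D = m then x m else \<zero>\<^bsub>V\<^esub>)"
        using nva_cre1[OF nva] Y0r x RF_carr by (simp add: dl_def)
    qed (use x RF_carr in \<open>auto simp: Pi_def\<close>)
    also have "\<dots> = x D"
      using m.finsum_singleton[of D "insert D (supp x)" x] RF_fin[OF x] x RF_carr by (simp add: Pi_def)
    finally show "pY x (-1) (dl 0 vac) D = x D" .
  qed
qed

lemma pY_lower1:
  assumes z: "z \<in> RF" "\<And>n. z n \<in> F (n - 1)" and y: "y \<in> RF"
  shows "pY z k y D \<in> F (D - 1)"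
  unfolding pY_def
proof (rule F_finsum)
  show "finite (supp z)" using RF_fin[OF z(1)] .
  fix m assume "m \<in> supp z"
  have "Y (z m) k (y (D - m + k + 1)) \<in> F (m - 1 + (D - m + k + 1) - k - 1)"
    using compat z(2) RF_F y by blast
  thus "Y (z m) k (y (D - m + k + 1)) \<in> F (D - 1)" by simp
qed

lemma pY_lower2:
  assumes x: "x \<in> RF" and z: "z \<in> RF" "\<And>n. z n \<in> F (n - 1)"
  shows "pY x k z D \<in> F (D - 1)"
  unfolding pY_def
proof (rule F_finsum)
  show "finite (supp x)" using RF_fin[OF x] .
  fix m assume "m \<in> supp x"
  have "Y (x m) k (z (D - m + k + 1)) \<in> F (m + (D - m + k + 1 - 1) - k - 1)"
    using compat z(2) RF_F x by blast
  thus "Y (x m) k (z (D - m + k + 1)) \<in> F (D - 1)" by simp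
qed

end


context filt begin

lemma pY_zero2: "x \<in> RF \<Longrightarrow> pY x k (\<lambda>_. \<zero>\<^bsub>V\<^esub>) = (\<lambda>_. \<zero>\<^bsub>V\<^esub>)"
  unfolding pY_def by (intro ext finsum_zero_cong) (use Y0r RF_carr in auto)

lemma lhsV_carr: "u \<in> carrier V \<Longrightarrow> v \<in> carrier V \<Longrightarrow> w \<in> carrier V \<Longrightarrow> assoc_lhs V Y l u v w a b \<in> carrier V"
  unfolding assoc_lhs_def by (intro m.finsum_closed) (auto simp: Pi_def Ycl)

lemma rhsV_carr: "u \<in> carrier V \<Longrightarrow> v \<in> carrier V \<Longrightarrow> w \<in> carrier V \<Longrightarrow> assoc_rhs V Y l u v w a b \<in> carrier V"
  unfolding assoc_rhs_def by (intro m.finsum_closed) (auto simp: Pi_def Ycl)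

lemma W_lhs_comp:
  assumes u: "u \<in> RF" and v: "v \<in> RF" and w: "w \<in> RF"
  shows "assoc_lhs W pY L u v w a b D =
    finsum V (\<lambda>m. finsum V (\<lambda>n. assoc_lhs V Y L (u m) (v n) (w (D - m - n + int L - a - b)) a b) (supp v)) (supp u)"
proof -
  let ?Su = "supp u" and ?Sv = "supp v"
  have fSu: "finite ?Su" and fSv: "finite ?Sv" using RF_fin u v by auto
  define c where "c = (\<lambda>j::nat. (of_int (a + int j) :: complex) gchoose j)"
  define P where "P = (\<lambda>m n. D - m - n + int L - a - b)"
  have fin2: "finite (?Sv \<times> supp w)" using RF_fin v w by simp
  obtain T where T: "\<forall>s\<in>?Sv \<times> supp w. \<forall>k\<ge>T. Y (v (fst s)) k (w (snd s)) = \<zero>\<^bsub>V\<^esub>"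
    using finite_bound[OF fin2, of "\<lambda>s k. Y (v (fst s)) k (w (snd s)) = \<zero>\<^bsub>V\<^esub>"]
      nva_trunc[OF nva] v w RF_carr by blast
  define N where "N = nat (T + b + 1)"
  have hN: "Y (v n) (int j - b - 1) (w p) = \<zero>\<^bsub>V\<^esub>" if "n \<in> ?Sv" "N \<le> j" for n p j
  proof (cases "p \<in> supp w")
    case True
    have "int j - b - 1 \<ge> T" using that(2) unfolding N_def by linarith
    thus ?thesis using T True that(1) by force
  next
    case False thus ?thesis using Y0r v RF_carr by (simp add: supp_iff)
  qed
  have subW: "{j. pY v (int j - b - 1) w \<noteq> \<zero>\<^bsub>W\<^esub>} \<subseteq> {..<N}"
  proof
    fix j assume j: "j \<in> {j. pY v (int j - b - 1) w \<noteq> \<zero>\<^bsub>W\<^esub>}"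
    show "j \<in> {..<N}"
    proof (rule ccontr)
      assume "j \<notin> {..<N}"
      hence "N \<le> j" by simp
      hence "pY v (int j - b - 1) w = (\<lambda>_. \<zero>\<^bsub>V\<^esub>)" unfolding pY_def
        by (intro ext finsum_zero_cong) (use hN in auto)
      thus False using j by simp
    qed
  qed
  have "assoc_lhs W pY L u v w a b = finsum W (\<lambda>j. c j \<odot>\<^bsub>W\<^esub> pY u (int L - 1 - int j - a) (pY v (int j - b - 1) w)) {..<N}"
    unfolding c_def
    by (rule assoc_lhs_superset[where M=W and Y=pY and K="{..<N}", OF W_module]) (use u v w pY_RF pY_zero2 subW in auto)
  also have "\<dots> = (\<lambda>D. finsum V (\<lambda>j. c j \<odot>\<^bsub>V\<^esub> pY u (int L - 1 - int j - a) (pY v (int j - b - 1) w) D) {..<N})"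
    by (subst W_finsum) (use u v w pY_RF RF_smult in auto)
  finally have e1: "assoc_lhs W pY L u v w a b D = finsum V (\<lambda>j. c j \<odot>\<^bsub>V\<^esub> pY u (int L - 1 - int j - a) (pY v (int j - b - 1) w) D) {..<N}"
    by simp
  define T3 where "T3 = (\<lambda>j m n. c j \<odot>\<^bsub>V\<^esub> Y (u m) (int L - 1 - int j - a) (Y (v n) (int j - b - 1) (w (P m n))))"
  have T3c: "T3 j m n \<in> carrier V" for j m n unfolding T3_def using u v w RF_carr Ycl by simp
  have e2: "c j \<odot>\<^bsub>V\<^esub> pY u (int L - 1 - int j - a) (pY v (int j - b - 1) w) D =
      finsum V (\<lambda>m. finsum V (\<lambda>n. T3 j m n) ?Sv) ?Su" for j
  proof -
    have "pY u (int L - 1 - int j - a) (pY v (int j - b - 1) w) D =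
       finsum V (\<lambda>m. finsum V (\<lambda>n. Y (u m) (int L - 1 - int j - a) (Y (v n) (int j - b - 1) (w (P m n)))) ?Sv) ?Su"
      unfolding pY_def[of u]
    proof (rule m.finsum_cong')
      show "(\<lambda>m. finsum V (\<lambda>n. Y (u m) (int L - 1 - int j - a) (Y (v n) (int j - b - 1) (w (P m n)))) ?Sv) \<in> ?Su \<rightarrow> carrier V"
        using u v w RF_carr Ycl by (auto intro!: m.finsum_closed simp: Pi_def)
      fix m assume m: "m \<in> ?Su"
      have "pY v (int j - b - 1) w (D - m + (int L - 1 - int j - a) + 1) = 
          finsum V (\<lambda>n. Y (v n) (int j - b - 1) (w (P m n))) ?Sv"
        unfolding pY_def P_def by (intro m.finsum_cong') (use v w RF_carr Ycl in \<open>auto simp: Pi_def algebra_simps\<close>)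
      thus "Y (u m) (int L - 1 - int j - a) (pY v (int j - b - 1) w (D - m + (int L - 1 - int j - a) + 1)) =
          finsum V (\<lambda>n. Y (u m) (int L - 1 - int j - a) (Y (v n) (int j - b - 1) (w (P m n)))) ?Sv"
        using Y_finsum_r[OF fSv] u v w RF_carr Ycl by simp
    qed simp
    thus ?thesis unfolding T3_def using fSu fSv u v w RF_carr Ycl
      by (simp add: m.finsum_smult_ldistr Pi_def m.finsum_closed)
  qed
  have "assoc_lhs W pY L u v w a b D = finsum V (\<lambda>j. finsum V (\<lambda>m. finsum V (\<lambda>n. T3 j m n) ?Sv) ?Su) {..<N}"
    using e1 e2 by simp
  also have "\<dots> = finsum V (\<lambda>m. finsum V (\<lambda>j. finsum V (\<lambda>n. T3 j m n) ?Sv) {..<N}) ?Su"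
    by (rule m.finsum_swap) (use fSu fSv T3c in \<open>auto intro!: m.finsum_closed simp: Pi_def\<close>)
  also have "\<dots> = finsum V (\<lambda>m. finsum V (\<lambda>n. finsum V (\<lambda>j. T3 j m n) {..<N}) ?Sv) ?Su"
    by (intro m.finsum_cong' refl m.finsum_swap) (use fSu fSv T3c in \<open>auto intro!: m.finsum_closed simp: Pi_def\<close>)
  also have "\<dots> = finsum V (\<lambda>m. finsum V (\<lambda>n. assoc_lhs V Y L (u m) (v n) (w (P m n)) a b) ?Sv) ?Su"
  proof (intro m.finsum_cong' refl)
    fix m n assume m: "m \<in> ?Su" and n: "n \<in> ?Sv"
    have sub: "{j. Y (v n) (int j - b - 1) (w (P m n)) \<noteq> \<zero>\<^bsub>V\<^esub>} \<subseteq> {..<N}"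
      using hN[OF n] by (auto simp: not_less[symmetric])
    show "finsum V (\<lambda>j. T3 j m n) {..<N} = assoc_lhs V Y L (u m) (v n) (w (P m n)) a b"
      unfolding T3_def c_def
      by (rule assoc_lhs_superset[where M=V and Y=Y and K="{..<N}", OF m.module_axioms, symmetric])
         (use u v w RF_carr Y0r Ycl sub in auto)
  next
    show "(\<lambda>m. finsum V (\<lambda>n. assoc_lhs V Y L (u m) (v n) (w (P m n)) a b) ?Sv) \<in> ?Su \<rightarrow> carrier V"
      using u v w RF_carr lhsV_carr by (auto intro!: m.finsum_closed simp: Pi_def)
  next
    fix m assume "m \<in> ?Su"
    show "(\<lambda>n. assoc_lhs V Y L (u m) (v n) (w (P m n)) a b) \<in> ?Sv \<rightarrow> carrier V"
      using u v w RF_carr lhsV_carr by (auto simp: Pi_def)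
  qed
  finally show ?thesis unfolding P_def .
qed

lemma pY_rhs_inner:
  assumes u: "u \<in> RF" and v: "v \<in> RF" and w: "w \<in> RF"
  shows "pY (pY u k1 v) k2 w D =
    finsum V (\<lambda>m. finsum V (\<lambda>n. Y (Y (u m) k1 (v n)) k2 (w (D - m - n + k1 + k2 + 2))) (supp v)) (supp u)"
proof -
  let ?Su = "supp u" and ?Sv = "supp v"
  have fSu: "finite ?Su" and fSv: "finite ?Sv" using RF_fin u v by auto
  define E where "E = (\<lambda>(m,n). m + n - k1 - 1) ` (?Su \<times> ?Sv)"
  have fE: "finite E" unfolding E_def using fSu fSv by simp
  have sE: "supp (pY u k1 v) \<subseteq> E" unfolding E_def by (rule pY_supp[OF u v])
  define h where "h = (\<lambda>m e. Y (Y (u m) k1 (v (e - m + k1 + 1))) k2 (w (D - e + k2 + 1)))"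
  have hc: "h m e \<in> carrier V" for m e unfolding h_def using u v w RF_carr Ycl by simp
  have "pY (pY u k1 v) k2 w D = finsum V (\<lambda>e. Y (pY u k1 v e) k2 (w (D - e + k2 + 1))) E"
    by (rule pY_sup[OF pY_RF[OF u v] w fE sE])
  also have "\<dots> = finsum V (\<lambda>e. finsum V (\<lambda>m. h m e) ?Su) E"
  proof (rule m.finsum_cong')
    fix e
    show "Y (pY u k1 v e) k2 (w (D - e + k2 + 1)) = finsum V (\<lambda>m. h m e) ?Su"
      unfolding pY_def h_def using Y_finsum_l[OF fSu] u v w RF_carr Ycl by simp
  qed (use hc fSu in \<open>auto intro!: m.finsum_closed simp: Pi_def\<close>)
  also have "\<dots> = finsum V (\<lambda>m. finsum V (\<lambda>e. h m e) E) ?Su"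
    by (rule m.finsum_swap) (use fSu fE hc in auto)
  also have "\<dots> = finsum V (\<lambda>m. finsum V (\<lambda>n. Y (Y (u m) k1 (v n)) k2 (w (D - m - n + k1 + k2 + 2))) ?Sv) ?Su"
  proof (rule m.finsum_cong')
    fix m assume m: "m \<in> ?Su"
    define c where "c = m - k1 - 1"
    have inj: "inj_on (\<lambda>n. n + c) ?Sv" by (simp add: inj_on_def)
    have sub: "(\<lambda>n. n + c) ` ?Sv \<subseteq> E"
    proof
      fix e assume "e \<in> (\<lambda>n. n + c) ` ?Sv"
      then obtain n where n: "n \<in> ?Sv" "e = n + c" by blast
      hence "e = (\<lambda>(m,n). m + n - k1 - 1) (m, n)" unfolding c_def by simp
      thus "e \<in> E" unfolding E_def using m n(1) by blast
    qed
    have "finsum V (h m) E = finsum V (h m) ((\<lambda>n. n + c) ` ?Sv)"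
    proof (rule m.add.finprod_mono_neutral_cong_left[symmetric, OF fE sub])
      fix e assume e: "e \<in> E - (\<lambda>n. n + c) ` ?Sv"
      have "e - m + k1 + 1 \<notin> ?Sv"
      proof
        assume "e - m + k1 + 1 \<in> ?Sv"
        hence "(e - m + k1 + 1) + c \<in> (\<lambda>n. n + c) ` ?Sv" by blast
        thus False using e unfolding c_def by simp
      qed
      hence "v (e - m + k1 + 1) = \<zero>\<^bsub>V\<^esub>" by (simp add: supp_iff)
      thus "h m e = \<zero>\<^bsub>V\<^esub>" unfolding h_def using Y0r Y0l u w RF_carr by simp
    qed (use hc in auto)
    also have "\<dots> = finsum V (\<lambda>n. h m (n + c)) ?Sv"
      by (rule m.finsum_reindex[OF _ inj]) (use hc in auto)
    also have "\<dots> = finsum V (\<lambda>n. Y (Y (u m) k1 (v n)) k2 (w (D - m - n + k1 + k2 + 2))) ?Sv"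
      unfolding h_def c_def by (intro m.finsum_cong') (use u v w RF_carr Ycl in \<open>auto simp: Pi_def algebra_simps\<close>)
    finally show "finsum V (\<lambda>e. h m e) E = finsum V (\<lambda>n. Y (Y (u m) k1 (v n)) k2 (w (D - m - n + k1 + k2 + 2))) ?Sv"
      by simp
  qed (use fSv u v w RF_carr Ycl in \<open>auto intro!: m.finsum_closed simp: Pi_def\<close>)
  finally show ?thesis .
qed

lemma W_rhs_comp:
  assumes u: "u \<in> RF" and v: "v \<in> RF" and w: "w \<in> RF"
  shows "assoc_rhs W pY L u v w a b D =
    finsum V (\<lambda>m. finsum V (\<lambda>n. assoc_rhs V Y L (u m) (v n) (w (D - m - n + int L - a - b)) a b) (supp v)) (supp u)"
proof -
  let ?Su = "supp u" and ?Sv = "supp v"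
  have fSu: "finite ?Su" and fSv: "finite ?Sv" using RF_fin u v by auto
  define P where "P = (\<lambda>m n. D - m - n + int L - a - b)"
  define T3 where "T3 = (\<lambda>i m n. (of_nat (L choose i) :: complex) \<odot>\<^bsub>V\<^esub>
       Y (Y (u m) (int L - int i - 1 - a) (v n)) (int i - b - 1) (w (P m n)))"
  have T3c: "T3 i m n \<in> carrier V" for i m n unfolding T3_def using u v w RF_carr Ycl by simp
  have "assoc_rhs W pY L u v w a b = (\<lambda>D. finsum V (\<lambda>i. (of_nat (L choose i) :: complex) \<odot>\<^bsub>V\<^esub>
       pY (pY u (int L - int i - 1 - a) v) (int i - b - 1) w D) {0..L})"
    unfolding assoc_rhs_def by (subst W_finsum) (use u v w pY_RF RF_smult in auto)
  hence "assoc_rhs W pY L u v w a b D = finsum V (\<lambda>i. (of_nat (L choose i) :: complex) \<odot>\<^bsub>V\<^esub>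
       pY (pY u (int L - int i - 1 - a) v) (int i - b - 1) w D) {0..L}" by simp
  also have "\<dots> = finsum V (\<lambda>i. finsum V (\<lambda>m. finsum V (\<lambda>n. T3 i m n) ?Sv) ?Su) {0..L}"
  proof (rule m.finsum_cong')
    fix i
    have "pY (pY u (int L - int i - 1 - a) v) (int i - b - 1) w D =
      finsum V (\<lambda>m. finsum V (\<lambda>n. Y (Y (u m) (int L - int i - 1 - a) (v n)) (int i - b - 1) (w (P m n))) ?Sv) ?Su"
      unfolding pY_rhs_inner[OF u v w] P_def by (simp add: algebra_simps)
    thus "(of_nat (L choose i) :: complex) \<odot>\<^bsub>V\<^esub> pY (pY u (int L - int i - 1 - a) v) (int i - b - 1) w D =
        finsum V (\<lambda>m. finsum V (\<lambda>n. T3 i m n) ?Sv) ?Su"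
      unfolding T3_def using fSu fSv u v w RF_carr Ycl
      by (simp add: m.finsum_smult_ldistr Pi_def m.finsum_closed)
  qed (use T3c fSu fSv in \<open>auto intro!: m.finsum_closed simp: Pi_def\<close>)
  also have "\<dots> = finsum V (\<lambda>m. finsum V (\<lambda>i. finsum V (\<lambda>n. T3 i m n) ?Sv) {0..L}) ?Su"
    by (rule m.finsum_swap) (use fSu fSv T3c in \<open>auto intro!: m.finsum_closed simp: Pi_def\<close>)
  also have "\<dots> = finsum V (\<lambda>m. finsum V (\<lambda>n. finsum V (\<lambda>i. T3 i m n) {0..L}) ?Sv) ?Su"
    by (intro m.finsum_cong' refl m.finsum_swap) (use fSu fSv T3c in \<open>auto intro!: m.finsum_closed simp: Pi_def\<close>)
  also have "\<dots> = finsum V (\<lambda>m. finsum V (\<lambda>n. assoc_rhs V Y L (u m) (v n) (w (P m n)) a b) ?Sv) ?Su"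
    unfolding T3_def assoc_rhs_def by simp
  finally show ?thesis unfolding P_def .
qed

lemma W_assoc:
  assumes u: "u \<in> RF" and v: "v \<in> RF" and w: "w \<in> RF"
  and hL: "\<And>m n p a b. m \<in> supp u \<Longrightarrow> n \<in> supp v \<Longrightarrow> assoc_lhs V Y L (u m) (v n) (w p) a b = assoc_rhs V Y L (u m) (v n) (w p) a b"
  shows "assoc_lhs W pY L u v w a b = assoc_rhs W pY L u v w a b"
proof
  fix D
  show "assoc_lhs W pY L u v w a b D = assoc_rhs W pY L u v w a b D"
    unfolding W_lhs_comp[OF u v w] W_rhs_comp[OF u v w]
    by (intro m.finsum_cong' refl) (use hL u v w RF_carr lhsV_carr rhsV_carr RF_fin in \<open>auto intro!: m.finsum_closed simp: Pi_def\<close>)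
qed

end


context filt begin

lemma W_assoc_ex:
  assumes u: "u \<in> RF" and v: "v \<in> RF" and w: "w \<in> RF"
  shows "\<exists>L. \<forall>a b. assoc_lhs W pY L u v w a b = assoc_rhs W pY L u v w a b"
proof -
  let ?S = "supp u \<times> supp v \<times> supp w"
  have fS: "finite ?S" using RF_fin u v w by simp
  let ?P = "\<lambda>s (n::int). \<forall>a b. assoc_lhs V Y (nat n) (u (fst s)) (v (fst (snd s))) (w (snd (snd s))) a b =
                       assoc_rhs V Y (nat n) (u (fst s)) (v (fst (snd s))) (w (snd (snd s))) a b"
  have ex: "\<exists>N. \<forall>n\<ge>N. ?P s n" if "s \<in> ?S" for s
  proof -
    obtain l where l: "\<forall>a b. assoc_lhs V Y l (u (fst s)) (v (fst (snd s))) (w (snd (snd s))) a b =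
                       assoc_rhs V Y l (u (fst s)) (v (fst (snd s))) (w (snd (snd s))) a b"
      using nva_assoc[OF nva RF_carr[OF u] RF_carr[OF v] RF_carr[OF w]] by blast
    show ?thesis
    proof (rule exI[of _ "int l"], rule allI, rule impI)
      fix n assume "int l \<le> n"
      hence "l \<le> nat n" by simp
      show "?P s n" by (rule assoc_mono[OF nva RF_carr[OF u] RF_carr[OF v] RF_carr[OF w] l \<open>l \<le> nat n\<close>])
    qed
  qed
  have "\<exists>N. \<forall>s\<in>?S. \<forall>n\<ge>N. ?P s n" by (rule finite_bound[OF fS ex])
  then obtain N where N: "\<forall>s\<in>?S. \<forall>n\<ge>N. ?P s n" by (elim exE)
  show ?thesis
  proof (intro exI[of _ "nat N"] allI)
    fix a b
    show "assoc_lhs W pY (nat N) u v w a b = assoc_rhs W pY (nat N) u v w a b"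
    proof (rule W_assoc[OF u v w])
      fix m n p a b assume m: "m \<in> supp u" and n: "n \<in> supp v"
      show "assoc_lhs V Y (nat N) (u m) (v n) (w p) a b = assoc_rhs V Y (nat N) (u m) (v n) (w p) a b"
      proof (cases "p \<in> supp w")
        case True
        hence "(m, n, p) \<in> ?S" using m n by simp
        hence "?P (m, n, p) N" using N by blast
        thus ?thesis by simp
      next
        case False
        hence "w p = \<zero>\<^bsub>V\<^esub>" by (simp add: supp_iff)
        thus ?thesis using assoc_zero_w[OF nva] u v RF_carr by simp
      qed
    qed
  qed
qed

lemma W_nva: "nonlocal_va W (dl 0 vac) pY"
  unfolding nonlocal_va_def
proof (intro conjI ballI allI impI)
  show "module CR W" by (rule W_module)
  show "dl 0 vac \<in> carrier W" using dl_RF[OF vac_F0] by simp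
next
  fix u v n assume "u \<in> carrier W" "v \<in> carrier W"
  thus "pY u n v \<in> carrier W" using pY_RF by simp
next
  fix u u' v n assume "u \<in> carrier W" "u' \<in> carrier W" "v \<in> carrier W"
  thus "pY (u \<oplus>\<^bsub>W\<^esub> u') n v = pY u n v \<oplus>\<^bsub>W\<^esub> pY u' n v" using pY_add1 by simp
next
  fix c u v n assume "u \<in> carrier W" "v \<in> carrier W"
  thus "pY (c \<odot>\<^bsub>W\<^esub> u) n v = c \<odot>\<^bsub>W\<^esub> pY u n v" using pY_sm1 by simp
next
  fix u v v' n assume "u \<in> carrier W" "v \<in> carrier W" "v' \<in> carrier W"
  thus "pY u n (v \<oplus>\<^bsub>W\<^esub> v') = pY u n v \<oplus>\<^bsub>W\<^esub> pY u n v'" using pY_add2 by simp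
next
  fix c u v n assume "u \<in> carrier W" "v \<in> carrier W"
  thus "pY u n (c \<odot>\<^bsub>W\<^esub> v) = c \<odot>\<^bsub>W\<^esub> pY u n v" using pY_sm2 by simp
next
  fix u v assume "u \<in> carrier W" "v \<in> carrier W"
  thus "\<exists>N. \<forall>n\<ge>N. pY u n v = \<zero>\<^bsub>W\<^esub>" using pY_trunc by simp
next
  fix v n assume "v \<in> carrier W"
  thus "pY (dl 0 vac) n v = (if n = -1 then v else \<zero>\<^bsub>W\<^esub>)" using pY_vac by simp
next
  fix v and n :: int assume "v \<in> carrier W" "0 \<le> n"
  thus "pY v n (dl 0 vac) = \<zero>\<^bsub>W\<^esub>" using pY_cre(1) by simp
next
  fix v assume "v \<in> carrier W"
  thus "pY v (-1) (dl 0 vac) = v" using pY_cre(2) by simp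
next
  fix u v w assume "u \<in> carrier W" "v \<in> carrier W" "w \<in> carrier W"
  thus "\<exists>l. \<forall>a b. assoc_lhs W pY l u v w a b = assoc_rhs W pY l u v w a b" using W_assoc_ex by simp
qed

end


context filt begin

lemma vc_add:
  assumes a: "a \<in> carrier V" and b: "b \<in> carrier V"
  shows "{p \<oplus>\<^bsub>V\<^esub> q |p q. p \<in> vcoset V (F n) a \<and> q \<in> vcoset V (F n) b} = vcoset V (F n) (a \<oplus>\<^bsub>V\<^esub> b)"
proof
  show "{p \<oplus>\<^bsub>V\<^esub> q |p q. p \<in> vcoset V (F n) a \<and> q \<in> vcoset V (F n) b} \<subseteq> vcoset V (F n) (a \<oplus>\<^bsub>V\<^esub> b)"
  proof
    fix z assume "z \<in> {p \<oplus>\<^bsub>V\<^esub> q |p q. p \<in> vcoset V (F n) a \<and> q \<in> vcoset V (F n) b}"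
    then obtain y1 y2 where y: "y1 \<in> F n" "y2 \<in> F n" "z = (a \<oplus>\<^bsub>V\<^esub> y1) \<oplus>\<^bsub>V\<^esub> (b \<oplus>\<^bsub>V\<^esub> y2)"
      unfolding vcoset_def by blast
    have "z = (a \<oplus>\<^bsub>V\<^esub> b) \<oplus>\<^bsub>V\<^esub> (y1 \<oplus>\<^bsub>V\<^esub> y2)" using y a b F_carr by (simp add: m.a_ac)
    thus "z \<in> vcoset V (F n) (a \<oplus>\<^bsub>V\<^esub> b)" unfolding vcoset_def using F_add y by blast
  qed
  show "vcoset V (F n) (a \<oplus>\<^bsub>V\<^esub> b) \<subseteq> {p \<oplus>\<^bsub>V\<^esub> q |p q. p \<in> vcoset V (F n) a \<and> q \<in> vcoset V (F n) b}"
  proof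
    fix z assume "z \<in> vcoset V (F n) (a \<oplus>\<^bsub>V\<^esub> b)"
    then obtain y where y: "y \<in> F n" "z = (a \<oplus>\<^bsub>V\<^esub> b) \<oplus>\<^bsub>V\<^esub> y" unfolding vcoset_def by blast
    have "z = (a \<oplus>\<^bsub>V\<^esub> y) \<oplus>\<^bsub>V\<^esub> (b \<oplus>\<^bsub>V\<^esub> \<zero>\<^bsub>V\<^esub>)" using y a b F_carr by (simp add: m.a_ac)
    moreover have "a \<oplus>\<^bsub>V\<^esub> y \<in> vcoset V (F n) a" "b \<oplus>\<^bsub>V\<^esub> \<zero>\<^bsub>V\<^esub> \<in> vcoset V (F n) b"
      unfolding vcoset_def using y F_zero by blast+
    ultimately show "z \<in> {p \<oplus>\<^bsub>V\<^esub> q |p q. p \<in> vcoset V (F n) a \<and> q \<in> vcoset V (F n) b}" by blast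
  qed
qed

lemma vc_sm:
  assumes a: "a \<in> carrier V"
  shows "{(c \<odot>\<^bsub>V\<^esub> p) \<oplus>\<^bsub>V\<^esub> q |p q. p \<in> vcoset V (F n) a \<and> q \<in> F n} = vcoset V (F n) (c \<odot>\<^bsub>V\<^esub> a)"
proof
  show "{(c \<odot>\<^bsub>V\<^esub> p) \<oplus>\<^bsub>V\<^esub> q |p q. p \<in> vcoset V (F n) a \<and> q \<in> F n} \<subseteq> vcoset V (F n) (c \<odot>\<^bsub>V\<^esub> a)"
  proof
    fix z assume "z \<in> {(c \<odot>\<^bsub>V\<^esub> p) \<oplus>\<^bsub>V\<^esub> q |p q. p \<in> vcoset V (F n) a \<and> q \<in> F n}"
    then obtain y1 y2 where y: "y1 \<in> F n" "y2 \<in> F n" "z = (c \<odot>\<^bsub>V\<^esub> (a \<oplus>\<^bsub>V\<^esub> y1)) \<oplus>\<^bsub>V\<^esub> y2"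
      unfolding vcoset_def by blast
    have "z = (c \<odot>\<^bsub>V\<^esub> a) \<oplus>\<^bsub>V\<^esub> (c \<odot>\<^bsub>V\<^esub> y1 \<oplus>\<^bsub>V\<^esub> y2)" using y a F_carr by (simp add: m.a_ac m.smult_r_distr)
    thus "z \<in> vcoset V (F n) (c \<odot>\<^bsub>V\<^esub> a)" unfolding vcoset_def using F_add F_smult y by blast
  qed
  show "vcoset V (F n) (c \<odot>\<^bsub>V\<^esub> a) \<subseteq> {(c \<odot>\<^bsub>V\<^esub> p) \<oplus>\<^bsub>V\<^esub> q |p q. p \<in> vcoset V (F n) a \<and> q \<in> F n}"
  proof
    fix z assume "z \<in> vcoset V (F n) (c \<odot>\<^bsub>V\<^esub> a)"
    then obtain y where y: "y \<in> F n" "z = (c \<odot>\<^bsub>V\<^esub> a) \<oplus>\<^bsub>V\<^esub> y" unfolding vcoset_def by blast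
    moreover have "a \<in> vcoset V (F n) a" unfolding vcoset_def using F_zero a by force
    ultimately show "z \<in> {(c \<odot>\<^bsub>V\<^esub> p) \<oplus>\<^bsub>V\<^esub> q |p q. p \<in> vcoset V (F n) a \<and> q \<in> F n}" by blast
  qed
qed

lemma vc_zero: "vcoset V (F n) \<zero>\<^bsub>V\<^esub> = F n"
proof -
  have h: "\<And>y. y \<in> F n \<Longrightarrow> \<zero>\<^bsub>V\<^esub> \<oplus>\<^bsub>V\<^esub> y = y" using F_carr by simp
  show ?thesis unfolding vcoset_def
  proof
    show "{\<zero>\<^bsub>V\<^esub> \<oplus>\<^bsub>V\<^esub> y |y. y \<in> F n} \<subseteq> F n" using h by auto
    show "F n \<subseteq> {\<zero>\<^bsub>V\<^esub> \<oplus>\<^bsub>V\<^esub> y |y. y \<in> F n}"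
    proof
      fix y assume "y \<in> F n"
      thus "y \<in> {\<zero>\<^bsub>V\<^esub> \<oplus>\<^bsub>V\<^esub> y |y. y \<in> F n}" using h[of y] by force
    qed
  qed
qed

lemma vc_shift:
  assumes a: "a \<in> carrier V" and z: "z \<in> F n"
  shows "vcoset V (F n) (a \<oplus>\<^bsub>V\<^esub> z) = vcoset V (F n) a"
proof
  show "vcoset V (F n) (a \<oplus>\<^bsub>V\<^esub> z) \<subseteq> vcoset V (F n) a"
  proof
    fix p assume "p \<in> vcoset V (F n) (a \<oplus>\<^bsub>V\<^esub> z)"
    then obtain y where y: "y \<in> F n" "p = a \<oplus>\<^bsub>V\<^esub> z \<oplus>\<^bsub>V\<^esub> y" unfolding vcoset_def by blast
    hence "p = a \<oplus>\<^bsub>V\<^esub> (z \<oplus>\<^bsub>V\<^esub> y)" using a z F_carr by (simp add: m.a_ac)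
    thus "p \<in> vcoset V (F n) a" unfolding vcoset_def using F_add z y by blast
  qed
  show "vcoset V (F n) a \<subseteq> vcoset V (F n) (a \<oplus>\<^bsub>V\<^esub> z)"
  proof
    fix p assume "p \<in> vcoset V (F n) a"
    then obtain y where y: "y \<in> F n" "p = a \<oplus>\<^bsub>V\<^esub> y" unfolding vcoset_def by blast
    hence "p = a \<oplus>\<^bsub>V\<^esub> z \<oplus>\<^bsub>V\<^esub> (\<ominus>\<^bsub>V\<^esub> z \<oplus>\<^bsub>V\<^esub> y)" using a z F_carr by (simp add: m.a_assoc m.r_neg2)
    thus "p \<in> vcoset V (F n) (a \<oplus>\<^bsub>V\<^esub> z)" unfolding vcoset_def using F_add F_neg z y by blast
  qed
qed

lemma vc_eqD:
  assumes a: "a \<in> carrier V" and b: "b \<in> carrier V" and e: "vcoset V (F n) a = vcoset V (F n) b"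
  shows "\<ominus>\<^bsub>V\<^esub> b \<oplus>\<^bsub>V\<^esub> a \<in> F n"
proof -
  have "a \<in> vcoset V (F n) a" unfolding vcoset_def using F_zero a by force
  then obtain y where y: "y \<in> F n" "a = b \<oplus>\<^bsub>V\<^esub> y" using e unfolding vcoset_def by blast
  hence "\<ominus>\<^bsub>V\<^esub> b \<oplus>\<^bsub>V\<^esub> a = y" using b F_carr by (simp add: m.r_neg1)
  thus ?thesis using y by simp
qed

lemma vc_low: "a \<in> F n \<Longrightarrow> vcoset V (F n) a = F n"
  using vc_shift[of "\<zero>\<^bsub>V\<^esub>" a n] vc_zero F_carr by simp

definition cls :: "(int \<Rightarrow> 'v) \<Rightarrow> int \<Rightarrow> 'v set" where
  "cls x = (\<lambda>n. vcoset V (F (n - 1)) (x n))"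

definition rep :: "(int \<Rightarrow> 'v set) \<Rightarrow> int \<Rightarrow> 'v" where
  "rep g = (SOME x. x \<in> RF \<and> cls x = g)"

definition YG :: "(int \<Rightarrow> 'v set) vop" where
  "YG g k h = cls (pY (rep g) k (rep h))"

lemma Gr_simps[simp]: "carrier (Gr V F) = gr_carrier V F" "g \<oplus>\<^bsub>Gr V F\<^esub> h = gr_add V g h"
  "c \<odot>\<^bsub>Gr V F\<^esub> g = gr_smult V F c g" "\<zero>\<^bsub>Gr V F\<^esub> = gr_zero F"
  by (simp_all add: Gr_def)

lemma cls_carrier: "x \<in> RF \<Longrightarrow> cls x \<in> gr_carrier V F"
proof -
  assume x: "x \<in> RF"
  have "{n. cls x n \<noteq> F (n - 1)} \<subseteq> supp x" unfolding cls_def supp_def using vc_zero by auto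
  hence "finite {n. cls x n \<noteq> F (n - 1)}" using RF_fin[OF x] finite_subset by blast
  moreover have "\<forall>n. \<exists>y\<in>F n. cls x n = vcoset V (F (n - 1)) y" unfolding cls_def using RF_F[OF x] by blast
  ultimately show ?thesis unfolding gr_carrier_def by blast
qed

lemma cls_surj: "cls ` RF = gr_carrier V F"
proof
  show "cls ` RF \<subseteq> gr_carrier V F" using cls_carrier by blast
  show "gr_carrier V F \<subseteq> cls ` RF"
  proof
    fix g assume g: "g \<in> gr_carrier V F"
    hence ex: "\<forall>n. \<exists>y\<in>F n. g n = vcoset V (F (n - 1)) y" and fin: "finite {n. g n \<noteq> F (n - 1)}"
      unfolding gr_carrier_def by blast+
    define x where "x = (\<lambda>n. if g n = F (n - 1) then \<zero>\<^bsub>V\<^esub> else (SOME y. y \<in> F n \<and> g n = vcoset V (F (n - 1)) y))"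
    have xs: "x n \<in> F n \<and> g n = vcoset V (F (n - 1)) (x n)" for n
    proof (cases "g n = F (n - 1)")
      case True thus ?thesis unfolding x_def using F_zero vc_zero by simp
    next
      case False thus ?thesis unfolding x_def using someI_ex[of "\<lambda>y. y \<in> F n \<and> g n = vcoset V (F (n - 1)) y"] ex by auto
    qed
    have "supp x \<subseteq> {n. g n \<noteq> F (n - 1)}" unfolding supp_def x_def by auto
    hence "x \<in> RF" using xs fin finite_subset by (intro RF_I) auto
    moreover have "cls x = g" unfolding cls_def using xs by auto
    ultimately show "g \<in> cls ` RF" by blast
  qed
qed

lemma rep: "g \<in> gr_carrier V F \<Longrightarrow> rep g \<in> RF \<and> cls (rep g) = g"
proof -
  assume g: "g \<in> gr_carrier V F"
  hence "g \<in> cls ` RF" using cls_surj by simp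
  then obtain x where "x \<in> RF" "g = cls x" by (rule imageE)
  hence "\<exists>x. x \<in> RF \<and> cls x = g" by blast
  from someI_ex[OF this] show ?thesis unfolding rep_def .
qed

lemma cls_add: "x \<in> RF \<Longrightarrow> y \<in> RF \<Longrightarrow> cls (x \<oplus>\<^bsub>W\<^esub> y) = gr_add V (cls x) (cls y)"
  unfolding cls_def gr_add_def W_simps(2) by (rule ext, rule vc_add[symmetric]) (simp_all add: RF_carr)

lemma cls_sm: "x \<in> RF \<Longrightarrow> cls (c \<odot>\<^bsub>W\<^esub> x) = gr_smult V F c (cls x)"
  unfolding cls_def gr_smult_def W_simps(3) by (rule ext, rule vc_sm[symmetric]) (simp add: RF_carr)

lemma cls_zero: "cls \<zero>\<^bsub>W\<^esub> = gr_zero F"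
  unfolding cls_def gr_zero_def W_simps(4) by (rule ext, rule vc_zero)

lemma cls_eqD:
  assumes x: "x \<in> RF" and x': "x' \<in> RF" and e: "cls x' = cls x"
  shows "\<ominus>\<^bsub>V\<^esub> x n \<oplus>\<^bsub>V\<^esub> x' n \<in> F (n - 1)"
proof -
  have "cls x' n = cls x n" using e by simp
  thus ?thesis unfolding cls_def by (rule vc_eqD[OF RF_carr[OF x'] RF_carr[OF x]])
qed

lemma cls_pY:
  assumes x: "x \<in> RF" and y: "y \<in> RF"
  shows "YG (cls x) k (cls y) = cls (pY x k y)"
proof -
  define x' where "x' = rep (cls x)"
  define y' where "y' = rep (cls y)"
  have x': "x' \<in> RF" "cls x' = cls x" using rep[OF cls_carrier[OF x]] unfolding x'_def by auto
  have y': "y' \<in> RF" "cls y' = cls y" using rep[OF cls_carrier[OF y]] unfolding y'_def by auto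
  define dx where "dx = (\<lambda>n. \<ominus>\<^bsub>V\<^esub> x n \<oplus>\<^bsub>V\<^esub> x' n)"
  define dy where "dy = (\<lambda>n. \<ominus>\<^bsub>V\<^esub> y n \<oplus>\<^bsub>V\<^esub> y' n)"
  have dx: "dx \<in> RF" "\<And>n. dx n \<in> F (n - 1)" unfolding dx_def
    using RF_add[OF RF_neg[OF x] x'(1)] cls_eqD[OF x x'] by auto
  have dy: "dy \<in> RF" "\<And>n. dy n \<in> F (n - 1)" unfolding dy_def
    using RF_add[OF RF_neg[OF y] y'(1)] cls_eqD[OF y y'] by auto
  have ex': "x' = (\<lambda>n. x n \<oplus>\<^bsub>V\<^esub> dx n)" unfolding dx_def using x x' RF_carr by (auto simp: m.r_neg2)
  have ey': "y' = (\<lambda>n. y n \<oplus>\<^bsub>V\<^esub> dy n)" unfolding dy_def using y y' RF_carr by (auto simp: m.r_neg2)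
  have "pY x' k y' D = pY x k y D \<oplus>\<^bsub>V\<^esub> (pY x k dy D \<oplus>\<^bsub>V\<^esub> pY dx k y' D)" for D
  proof -
    have "pY x' k y' D = pY x k y' D \<oplus>\<^bsub>V\<^esub> pY dx k y' D" using pY_add1[OF x dx(1) y'(1)] ex' by simp
    also have "pY x k y' D = pY x k y D \<oplus>\<^bsub>V\<^esub> pY x k dy D" using pY_add2[OF x y dy(1)] ey' by simp
    finally show ?thesis using pY_carr x y y' dx dy by (simp add: m.a_assoc)
  qed
  hence "cls (pY x' k y') = cls (pY x k y)"
  proof -
    assume h: "\<And>D. pY x' k y' D = pY x k y D \<oplus>\<^bsub>V\<^esub> (pY x k dy D \<oplus>\<^bsub>V\<^esub> pY dx k y' D)"
    show ?thesis unfolding cls_def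
    proof (rule ext)
      fix D
      have "pY x k dy D \<oplus>\<^bsub>V\<^esub> pY dx k y' D \<in> F (D - 1)"
        using F_add pY_lower2[OF x dy] pY_lower1[OF dx(1,2) y'(1)] by blast
      thus "vcoset V (F (D - 1)) (pY x' k y' D) = vcoset V (F (D - 1)) (pY x k y D)"
        unfolding h by (rule vc_shift[OF pY_carr[OF x y]])
    qed
  qed
  thus ?thesis unfolding YG_def x'_def y'_def by simp
qed

lemma cls_dl: "a \<in> F n \<Longrightarrow> cls (dl n a) = gr_hom V F n a"
  unfolding cls_def dl_def gr_hom_def using vc_zero by (auto intro!: ext)

lemma Gr_nva: "nonlocal_va (Gr V F) (gr_hom V F 0 vac) YG"
proof -
  have "nonlocal_va (Gr V F) (cls (dl 0 vac)) YG"
  proof (rule nva_image[OF W_nva])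
    show "cls ` carrier W = carrier (Gr V F)" using cls_surj by simp
    show "\<And>x y. x \<in> carrier W \<Longrightarrow> y \<in> carrier W \<Longrightarrow> cls (x \<oplus>\<^bsub>W\<^esub> y) = cls x \<oplus>\<^bsub>Gr V F\<^esub> cls y"
      using cls_add by simp
    show "\<And>c x. x \<in> carrier W \<Longrightarrow> cls (c \<odot>\<^bsub>W\<^esub> x) = c \<odot>\<^bsub>Gr V F\<^esub> cls x" using cls_sm by simp
    show "cls \<zero>\<^bsub>W\<^esub> = \<zero>\<^bsub>Gr V F\<^esub>" using cls_zero by simp
    show "\<And>u v k. u \<in> carrier W \<Longrightarrow> v \<in> carrier W \<Longrightarrow> cls (pY u k v) = YG (cls u) k (cls v)"
      using cls_pY by simp
  qed
  thus ?thesis using cls_dl[OF vac_F0] by simp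
qed

end


context filt begin

lemma Gr_module: "module CR (Gr V F)" using nva_module[OF Gr_nva] .

lemma gr_hom_carr: "a \<in> F n \<Longrightarrow> gr_hom V F n a \<in> gr_carrier V F"
  using cls_carrier[OF dl_RF] cls_dl by metis

lemma gr_hom_zero: "gr_hom V F n \<zero>\<^bsub>V\<^esub> = gr_zero F"
  unfolding gr_hom_def gr_zero_def by (intro ext) (simp add: vc_zero)

lemma gr_hom_low: "a \<in> F (n - 1) \<Longrightarrow> gr_hom V F n a = gr_zero F"
  unfolding gr_hom_def gr_zero_def by (intro ext) (simp add: vc_low)

lemma gr_hom_add:
  assumes "a \<in> F n" "b \<in> F n"
  shows "gr_add V (gr_hom V F n a) (gr_hom V F n b) = gr_hom V F n (a \<oplus>\<^bsub>V\<^esub> b)"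
proof -
  have "dl n a \<oplus>\<^bsub>W\<^esub> dl n b = dl n (a \<oplus>\<^bsub>V\<^esub> b)" unfolding dl_def by (auto intro!: ext)
  thus ?thesis using cls_add[OF dl_RF dl_RF, OF assms] cls_dl assms F_add by metis
qed

lemma gr_hom_sm:
  assumes "a \<in> F n"
  shows "gr_smult V F c (gr_hom V F n a) = gr_hom V F n (c \<odot>\<^bsub>V\<^esub> a)"
proof -
  have "c \<odot>\<^bsub>W\<^esub> dl n a = dl n (c \<odot>\<^bsub>V\<^esub> a)" unfolding dl_def using mod_smr0[OF m.module_axioms] by (auto intro!: ext)
  thus ?thesis using cls_sm[OF dl_RF, OF assms] cls_dl assms F_smult by metis
qed

lemma pY_dl_dl:
  assumes a: "a \<in> F m" and b: "b \<in> F n"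
  shows "pY (dl m a) k (dl n b) = dl (m + n - k - 1) (Y a k b)"
proof
  fix D
  show "pY (dl m a) k (dl n b) D = dl (m + n - k - 1) (Y a k b) D"
    unfolding pY_dl1[OF a dl_RF[OF b]] using Y0r F_carr a by (auto simp: dl_def)
qed

lemma YG_hom:
  assumes a: "a \<in> F m" and b: "b \<in> F n"
  shows "YG (gr_hom V F m a) k (gr_hom V F n b) = gr_hom V F (m + n - k - 1) (Y a k b)"
proof -
  have "YG (gr_hom V F m a) k (gr_hom V F n b) = cls (pY (dl m a) k (dl n b))"
    using cls_pY[OF dl_RF[OF a] dl_RF[OF b]] cls_dl[OF a] cls_dl[OF b] by simp
  also have "\<dots> = gr_hom V F (m + n - k - 1) (Y a k b)"
    using pY_dl_dl[OF a b] cls_dl compat[OF a b] by simp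
  finally show ?thesis .
qed

lemma Gr_finsum_hom:
  assumes A: "finite A" and a: "\<And>n. a n \<in> F n"
  shows "finsum (Gr V F) (\<lambda>n. gr_hom V F n (a n)) A = cls (\<lambda>D. if D \<in> A then a D else \<zero>\<^bsub>V\<^esub>)"
proof -
  have ac: "\<And>n. a n \<in> carrier V" using a F_carr by blast
  have "finsum (Gr V F) (\<lambda>n. gr_hom V F n (a n)) A = finsum (Gr V F) (\<lambda>n. cls (dl n (a n))) A"
    using cls_dl a by simp
  also have "\<dots> = cls (finsum W (\<lambda>n. dl n (a n)) A)"
  proof (rule hom_finsum[OF W_module Gr_module _ _ _ A, symmetric])
    show "\<And>x y. x \<in> carrier W \<Longrightarrow> y \<in> carrier W \<Longrightarrow> cls (x \<oplus>\<^bsub>W\<^esub> y) = cls x \<oplus>\<^bsub>Gr V F\<^esub> cls y"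
      using cls_add by simp
    show "cls \<zero>\<^bsub>W\<^esub> = \<zero>\<^bsub>Gr V F\<^esub>" using cls_zero by simp
    show "\<And>x. x \<in> carrier W \<Longrightarrow> cls x \<in> carrier (Gr V F)" using cls_carrier by simp
    show "(\<lambda>n. dl n (a n)) \<in> A \<rightarrow> carrier W" using dl_RF a by simp
  qed
  also have "finsum W (\<lambda>n. dl n (a n)) A = (\<lambda>D. finsum V (\<lambda>n. dl n (a n) D) A)"
    using W_finsum[OF A] dl_RF a by simp
  also have "\<dots> = (\<lambda>D. if D \<in> A then a D else \<zero>\<^bsub>V\<^esub>)"
  proof
    fix D
    show "finsum V (\<lambda>n. dl n (a n) D) A = (if D \<in> A then a D else \<zero>\<^bsub>V\<^esub>)"
    proof (cases "D \<in> A")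
      case True
      have "finsum V (\<lambda>n. dl n (a n) D) A = finsum V (\<lambda>n. if D = n then a n else \<zero>\<^bsub>V\<^esub>) A"
        unfolding dl_def by (intro m.finsum_cong') (auto simp: Pi_def ac)
      also have "\<dots> = a D" using m.finsum_singleton[OF True A, of a] ac by (simp add: Pi_def)
      finally show ?thesis using True by simp
    next
      case False
      have "finsum V (\<lambda>n. dl n (a n) D) A = \<zero>\<^bsub>V\<^esub>" unfolding dl_def by (rule finsum_zero_cong) (use False in auto)
      thus ?thesis using False by simp
    qed
  qed
  finally show ?thesis .
qed

lemma decomp_char:
  assumes f: "\<forall>n. f n \<in> gr_grading V F n" and fin: "finite {n. f n \<noteq> gr_zero F}"
    and g: "g = finsum (Gr V F) f {n. f n \<noteq> gr_zero F}"
  shows "f n = (\<lambda>m. if m = n then g n else F (m - 1))"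
proof -
  have "\<forall>n. \<exists>a. a \<in> F n \<and> f n = gr_hom V F n a" using f unfolding gr_grading_def by blast
  then obtain a where a: "\<And>n. a n \<in> F n" "\<And>n. f n = gr_hom V F n (a n)" by metis
  let ?A = "{n. f n \<noteq> gr_zero F}"
  have fa: "f = (\<lambda>n. gr_hom V F n (a n))" using a(2) by auto
  have "g = finsum (Gr V F) (\<lambda>n. gr_hom V F n (a n)) ?A" using g by (simp add: fa)
  also have "\<dots> = cls (\<lambda>D. if D \<in> ?A then a D else \<zero>\<^bsub>V\<^esub>)" by (rule Gr_finsum_hom[OF fin a(1)])
  finally have gn: "g n = vcoset V (F (n - 1)) (if n \<in> ?A then a n else \<zero>\<^bsub>V\<^esub>)" unfolding cls_def by simp
  show ?thesis
  proof (cases "n \<in> ?A")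
    case True
    thus ?thesis using gn a(2)[of n] unfolding gr_hom_def by (auto intro!: ext)
  next
    case False
    hence "f n = gr_zero F" by simp
    thus ?thesis using gn False vc_zero unfolding gr_zero_def by (auto simp: fun_eq_iff)
  qed
qed

lemma decomp_ex:
  assumes g: "g \<in> gr_carrier V F"
  obtains x where "x \<in> RF" "\<forall>n. gr_hom V F n (x n) \<in> gr_grading V F n" "finite {n. gr_hom V F n (x n) \<noteq> gr_zero F}"
     "g = finsum (Gr V F) (\<lambda>n. gr_hom V F n (x n)) {n. gr_hom V F n (x n) \<noteq> gr_zero F}"
proof -
  define x where "x = rep g"
  have x: "x \<in> RF" "cls x = g" using rep[OF g] unfolding x_def by auto
  let ?A = "{n. gr_hom V F n (x n) \<noteq> gr_zero F}"
  have "?A \<subseteq> supp x" unfolding supp_def using gr_hom_zero by auto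
  hence fin: "finite ?A" using RF_fin[OF x(1)] finite_subset by blast
  have "finsum (Gr V F) (\<lambda>n. gr_hom V F n (x n)) ?A = cls (\<lambda>D. if D \<in> ?A then x D else \<zero>\<^bsub>V\<^esub>)"
    by (rule Gr_finsum_hom[OF fin RF_F[OF x(1)]])
  also have "\<dots> = cls x" unfolding cls_def
  proof (rule ext)
    fix D
    show "vcoset V (F (D - 1)) (if D \<in> ?A then x D else \<zero>\<^bsub>V\<^esub>) = vcoset V (F (D - 1)) (x D)"
    proof (cases "D \<in> ?A")
      case False
      hence "gr_hom V F D (x D) D = gr_zero F D" by simp
      hence "vcoset V (F (D - 1)) (x D) = F (D - 1)" unfolding gr_hom_def gr_zero_def by simp
      thus ?thesis using False vc_zero by simp
    qed simp
  qed
  finally have e: "finsum (Gr V F) (\<lambda>n. gr_hom V F n (x n)) ?A = cls x" .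
  show ?thesis
  proof (rule that[OF x(1) _ fin])
    show "\<forall>n. gr_hom V F n (x n) \<in> gr_grading V F n" using RF_F[OF x(1)] unfolding gr_grading_def by simp
    show "g = finsum (Gr V F) (\<lambda>n. gr_hom V F n (x n)) ?A" using e x(2) by simp
  qed
qed

lemma Gr_decomp: "direct_sum_decomp (Gr V F) (gr_grading V F)"
  unfolding direct_sum_decomp_def
proof (intro conjI allI ballI)
  interpret g: module CR "Gr V F" by (rule Gr_module)
  fix n
  show "submodule (gr_grading V F n) CR (Gr V F)"
  proof (rule g.submoduleI)
    show "gr_grading V F n \<subseteq> carrier (Gr V F)" unfolding gr_grading_def using gr_hom_carr by auto
    show "\<zero>\<^bsub>Gr V F\<^esub> \<in> gr_grading V F n" unfolding gr_grading_def Gr_simps by (rule image_eqI[where x="\<zero>\<^bsub>V\<^esub>"]) (simp_all add: gr_hom_zero F_zero)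
  next
    fix u assume "u \<in> gr_grading V F n"
    then obtain a where a: "a \<in> F n" "u = gr_hom V F n a" unfolding gr_grading_def by blast
    have "\<ominus>\<^bsub>V\<^esub> a \<oplus>\<^bsub>V\<^esub> a = \<zero>\<^bsub>V\<^esub>" using a(1) F_carr by (simp add: m.l_neg)
    hence h: "gr_hom V F n (\<ominus>\<^bsub>V\<^esub> a) \<oplus>\<^bsub>Gr V F\<^esub> u = \<zero>\<^bsub>Gr V F\<^esub>"
      using a(2) gr_hom_add[OF F_neg[OF a(1)] a(1)] gr_hom_zero by simp
    have "\<ominus>\<^bsub>Gr V F\<^esub> u = gr_hom V F n (\<ominus>\<^bsub>V\<^esub> a)"
      by (rule g.minus_equality[OF h]) (use a gr_hom_carr F_neg in simp_all)
    thus "\<ominus>\<^bsub>Gr V F\<^esub> u \<in> gr_grading V F n" unfolding gr_grading_def using F_neg a by simp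
  next
    fix u v assume "u \<in> gr_grading V F n" "v \<in> gr_grading V F n"
    then obtain a b where "a \<in> F n" "u = gr_hom V F n a" "b \<in> F n" "v = gr_hom V F n b" unfolding gr_grading_def by blast
    thus "u \<oplus>\<^bsub>Gr V F\<^esub> v \<in> gr_grading V F n" unfolding gr_grading_def using gr_hom_add F_add by simp
  next
    fix c u assume "u \<in> gr_grading V F n"
    then obtain a where "a \<in> F n" "u = gr_hom V F n a" unfolding gr_grading_def by blast
    thus "c \<odot>\<^bsub>Gr V F\<^esub> u \<in> gr_grading V F n" unfolding gr_grading_def using gr_hom_sm F_smult by simp
  qed
next
  fix g assume g: "g \<in> carrier (Gr V F)"
  hence gc: "g \<in> gr_carrier V F" by simp
  obtain x where x: "x \<in> RF" "\<forall>n. gr_hom V F n (x n) \<in> gr_grading V F n" "finite {n. gr_hom V F n (x n) \<noteq> gr_zero F}"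
     "g = finsum (Gr V F) (\<lambda>n. gr_hom V F n (x n)) {n. gr_hom V F n (x n) \<noteq> gr_zero F}"
    by (rule decomp_ex[OF gc])
  show "\<exists>!f. (\<forall>n. f n \<in> gr_grading V F n) \<and> finite {n. f n \<noteq> \<zero>\<^bsub>Gr V F\<^esub>} \<and> g = finsum (Gr V F) f {n. f n \<noteq> \<zero>\<^bsub>Gr V F\<^esub>}"
  proof (rule ex1I[of _ "\<lambda>n. gr_hom V F n (x n)"])
    show "(\<forall>n. gr_hom V F n (x n) \<in> gr_grading V F n) \<and> finite {n. gr_hom V F n (x n) \<noteq> \<zero>\<^bsub>Gr V F\<^esub>} \<and>
      g = finsum (Gr V F) (\<lambda>n. gr_hom V F n (x n)) {n. gr_hom V F n (x n) \<noteq> \<zero>\<^bsub>Gr V F\<^esub>}" using x by simp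
    fix f assume "(\<forall>n. f n \<in> gr_grading V F n) \<and> finite {n. f n \<noteq> \<zero>\<^bsub>Gr V F\<^esub>} \<and> g = finsum (Gr V F) f {n. f n \<noteq> \<zero>\<^bsub>Gr V F\<^esub>}"
    hence H: "\<forall>n. f n \<in> gr_grading V F n" "finite {n. f n \<noteq> gr_zero F}" "g = finsum (Gr V F) f {n. f n \<noteq> gr_zero F}"
      by simp_all
    have "f n = (\<lambda>m. if m = n then g n else F (m - 1))" for n by (rule decomp_char[OF H])
    moreover have "gr_hom V F n (x n) = (\<lambda>m. if m = n then g n else F (m - 1))" for n
      by (rule decomp_char[OF x(2,3,4)])
    ultimately show "f = (\<lambda>n. gr_hom V F n (x n))" by (intro ext) simp
  qed
qed

lemma Gr_graded: "graded_nonlocal_va (Gr V F) (gr_hom V F 0 vac) YG (gr_grading V F)"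
  unfolding graded_nonlocal_va_def
proof (intro conjI allI impI)
  show "nonlocal_va (Gr V F) (gr_hom V F 0 vac) YG" by (rule Gr_nva)
  show "direct_sum_decomp (Gr V F) (gr_grading V F)" by (rule Gr_decomp)
  show "gr_hom V F 0 vac \<in> gr_grading V F 0" unfolding gr_grading_def using vac_F0 by simp
next
  fix m n k u v assume "u \<in> gr_grading V F m" "v \<in> gr_grading V F n"
  then obtain a b where ab: "a \<in> F m" "u = gr_hom V F m a" "b \<in> F n" "v = gr_hom V F n b" unfolding gr_grading_def by blast
  thus "YG u k v \<in> gr_grading V F (m + n - k - 1)" unfolding gr_grading_def using YG_hom compat by simp
qed

end


context filt begin

lemma gr_hom_neg:
  assumes a: "a \<in> F n"
  shows "\<ominus>\<^bsub>Gr V F\<^esub> gr_hom V F n a = gr_hom V F n (\<ominus>\<^bsub>V\<^esub> a)"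
proof -
  interpret g: module CR "Gr V F" by (rule Gr_module)
  have "\<ominus>\<^bsub>V\<^esub> a \<oplus>\<^bsub>V\<^esub> a = \<zero>\<^bsub>V\<^esub>" using a F_carr by (simp add: m.l_neg)
  hence h: "gr_hom V F n (\<ominus>\<^bsub>V\<^esub> a) \<oplus>\<^bsub>Gr V F\<^esub> gr_hom V F n a = \<zero>\<^bsub>Gr V F\<^esub>"
    using gr_hom_add[OF F_neg[OF a] a] gr_hom_zero by simp
  show ?thesis
    by (rule g.minus_equality[OF h]) (use a gr_hom_carr F_neg in simp_all)
qed

lemma gen_part:
  assumes gen: "generating_subset V vac Y T" and Fdef: "F = assoc_filtration V vac Y T"
  shows "T \<subseteq> F 1 \<and> generating_subset (Gr V F) (gr_hom V F 0 vac) YG (gr_hom V F 1 ` T)"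
proof -
  interpret g: module CR "Gr V F" by (rule Gr_module)
  have Tc: "T \<subseteq> carrier V" using gen unfolding generating_subset_def by blast
  define Gs where "Gs = (\<lambda>n. {word_val Y vac ws | ws. set (map fst ws) \<subseteq> T \<and>
                   sum_list (map snd ws) \<ge> - n \<and> (n < 0 \<longrightarrow> ws \<noteq> [])})"
  have Fn: "F n = lin_span V (Gs n)" for n using Fdef unfolding assoc_filtration_def Gs_def by simp
  have span_in: "x \<in> S \<Longrightarrow> x \<in> lin_span V S" for x S unfolding lin_span_def by blast
  have span_least: "submodule H CR V \<Longrightarrow> S \<subseteq> H \<Longrightarrow> lin_span V S \<subseteq> H" for H S unfolding lin_span_def by blast
  have word_F: "word_val Y vac ws \<in> F (- sum_list (map snd ws))" if "set (map fst ws) \<subseteq> T" for ws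
  proof -
    have "word_val Y vac ws \<in> Gs (- sum_list (map snd ws))"
      unfolding Gs_def mem_Collect_eq
      by (rule exI[of _ ws]) (use that in \<open>cases ws; simp\<close>)
    thus ?thesis using Fn span_in by blast
  qed
  have TF1: "T \<subseteq> F 1"
  proof
    fix u assume u: "u \<in> T"
    have "word_val Y vac [(u, -1)] \<in> F (- sum_list (map snd [(u, -1)]))" by (rule word_F) (use u in simp)
    thus "u \<in> F 1" using nva_cre1[OF nva] u Tc by auto
  qed
  let ?G = "gr_hom V F 1 ` T"
  let ?v = "gr_hom V F 0 vac"
  have Gc: "?G \<subseteq> carrier (Gr V F)" using gr_hom_carr TF1 by auto
  have carr_sub: "nonlocal_subalgebra (Gr V F) ?v YG (carrier (Gr V F))"
    unfolding nonlocal_subalgebra_def using g.carrier_is_submodule nva_vac[OF Gr_nva] nva_Ycl[OF Gr_nva] by blast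
  have all: "carrier (Gr V F) \<subseteq> S" if S: "nonlocal_subalgebra (Gr V F) ?v YG S" "?G \<subseteq> S" for S
  proof -
    have SM: "submodule S CR (Gr V F)" and vS: "?v \<in> S" and YS: "\<And>u v n. u \<in> S \<Longrightarrow> v \<in> S \<Longrightarrow> YG u n v \<in> S"
      using S(1) unfolding nonlocal_subalgebra_def by auto
    have Ssub: "S \<subseteq> carrier (Gr V F)" using g.submoduleE(1)[OF SM] .
    have Sadd: "\<And>a b. a \<in> S \<Longrightarrow> b \<in> S \<Longrightarrow> a \<oplus>\<^bsub>Gr V F\<^esub> b \<in> S" using g.submoduleE(5)[OF SM] .
    have Ssm: "\<And>c a. a \<in> S \<Longrightarrow> c \<odot>\<^bsub>Gr V F\<^esub> a \<in> S" using g.submoduleE(4)[OF SM] by simp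
    have Sneg: "\<And>a. a \<in> S \<Longrightarrow> \<ominus>\<^bsub>Gr V F\<^esub> a \<in> S" using g.submoduleE(3)[OF SM] .
    have S0: "gr_zero F \<in> S"
    proof -
      have "(0::complex) \<odot>\<^bsub>Gr V F\<^esub> ?v = \<zero>\<^bsub>Gr V F\<^esub>" using mod_sm0[OF g.module_axioms] vS Ssub by blast
      thus ?thesis using Ssm[OF vS, of 0] by simp
    qed
    have word_S: "gr_hom V F (- sum_list (map snd ws)) (word_val Y vac ws) \<in> S" if "set (map fst ws) \<subseteq> T" for ws
      using that
    proof (induct ws)
      case Nil thus ?case using vS by simp
    next
      case (Cons p ws)
      obtain u m where p: "p = (u, m)" by (cases p)
      have u: "u \<in> T" using Cons p by simp
      have ws: "set (map fst ws) \<subseteq> T" using Cons by simp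
      let ?s = "sum_list (map snd ws)"
      have "YG (gr_hom V F 1 u) m (gr_hom V F (- ?s) (word_val Y vac ws)) =
            gr_hom V F (1 + - ?s - m - 1) (Y u m (word_val Y vac ws))"
        by (rule YG_hom) (use TF1 u word_F[OF ws] in auto)
      moreover have "YG (gr_hom V F 1 u) m (gr_hom V F (- ?s) (word_val Y vac ws)) \<in> S"
        using YS Cons(1)[OF ws] S(2) u by blast
      ultimately have h: "gr_hom V F (1 + - ?s - m - 1) (Y u m (word_val Y vac ws)) \<in> S" by simp
      have idx: "- sum_list (map snd (p # ws)) = 1 + - ?s - m - 1" using p by simp
      have wv: "word_val Y vac (p # ws) = Y u m (word_val Y vac ws)" using p by simp
      show ?case unfolding idx wv by (rule h)
    qed
    have hom_S: "gr_hom V F n a \<in> S" if a: "a \<in> F n" for n a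
    proof -
      define H where "H = {a \<in> F n. gr_hom V F n a \<in> S}"
      have HM: "submodule H CR V"
      proof (rule m.submoduleI)
        show "H \<subseteq> carrier V" unfolding H_def using F_carr by blast
        show "\<zero>\<^bsub>V\<^esub> \<in> H" unfolding H_def using F_zero gr_hom_zero S0 by simp
      next
        fix a assume "a \<in> H"
        hence a: "a \<in> F n" "gr_hom V F n a \<in> S" unfolding H_def by auto
        have "gr_hom V F n (\<ominus>\<^bsub>V\<^esub> a) = \<ominus>\<^bsub>Gr V F\<^esub> gr_hom V F n a" using gr_hom_neg[OF a(1)] by simp
        thus "\<ominus>\<^bsub>V\<^esub> a \<in> H" unfolding H_def using Sneg[OF a(2)] F_neg[OF a(1)] by simp
      next
        fix a b assume "a \<in> H" "b \<in> H"
        hence a: "a \<in> F n" "gr_hom V F n a \<in> S" "b \<in> F n" "gr_hom V F n b \<in> S" unfolding H_def by auto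
        have "gr_hom V F n (a \<oplus>\<^bsub>V\<^esub> b) = gr_hom V F n a \<oplus>\<^bsub>Gr V F\<^esub> gr_hom V F n b" using gr_hom_add[OF a(1,3)] by simp
        thus "a \<oplus>\<^bsub>V\<^esub> b \<in> H" unfolding H_def using Sadd[OF a(2,4)] F_add[OF a(1,3)] by simp
      next
        fix c a assume "a \<in> H"
        hence a: "a \<in> F n" "gr_hom V F n a \<in> S" unfolding H_def by auto
        have "gr_hom V F n (c \<odot>\<^bsub>V\<^esub> a) = c \<odot>\<^bsub>Gr V F\<^esub> gr_hom V F n a" using gr_hom_sm[OF a(1)] by simp
        thus "c \<odot>\<^bsub>V\<^esub> a \<in> H" unfolding H_def using Ssm[OF a(2)] F_smult[OF a(1)] by simp
      qed
      have "Gs n \<subseteq> H"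
      proof
        fix x assume "x \<in> Gs n"
        then obtain ws where ws: "x = word_val Y vac ws" "set (map fst ws) \<subseteq> T" "sum_list (map snd ws) \<ge> - n"
          unfolding Gs_def by blast
        have xF: "x \<in> F n" using \<open>x \<in> Gs n\<close> Fn span_in by blast
        show "x \<in> H"
        proof (cases "- sum_list (map snd ws) = n")
          case True
          thus ?thesis unfolding H_def using xF word_S[OF ws(2)] ws(1) by auto
        next
          case False
          hence "- sum_list (map snd ws) \<le> n - 1" using ws(3) by simp
          hence "x \<in> F (n - 1)" using F_mono word_F[OF ws(2)] ws(1) by blast
          thus ?thesis unfolding H_def using xF gr_hom_low S0 by simp
        qed
      qed
      hence "F n \<subseteq> H" using Fn span_least[OF HM] by simp
      thus ?thesis using a unfolding H_def by blast
    qed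
    have fsum_S: "finsum (Gr V F) f A \<in> S" if "finite A" "\<And>i. i \<in> A \<Longrightarrow> f i \<in> S" for f A
      using that
    proof (induct A rule: finite_induct)
      case empty thus ?case using S0 by simp
    next
      case (insert x A)
      have "finsum (Gr V F) f (insert x A) = f x \<oplus>\<^bsub>Gr V F\<^esub> finsum (Gr V F) f A"
        using insert Ssub by (intro g.finsum_insert) (auto simp: Pi_def)
      thus ?case using insert Sadd by simp
    qed
    show ?thesis
    proof
      fix g assume "g \<in> carrier (Gr V F)"
      hence gc: "g \<in> gr_carrier V F" by simp
      obtain x where x: "x \<in> RF" "\<forall>n. gr_hom V F n (x n) \<in> gr_grading V F n" "finite {n. gr_hom V F n (x n) \<noteq> gr_zero F}"
        "g = finsum (Gr V F) (\<lambda>n. gr_hom V F n (x n)) {n. gr_hom V F n (x n) \<noteq> gr_zero F}"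
        by (rule decomp_ex[OF gc])
      show "g \<in> S" unfolding x(4) by (rule fsum_S[OF x(3)]) (use hom_S RF_F[OF x(1)] in blast)
    qed
  qed
  have "carrier (Gr V F) = \<Inter>{S. nonlocal_subalgebra (Gr V F) ?v YG S \<and> ?G \<subseteq> S}"
  proof
    show "carrier (Gr V F) \<subseteq> \<Inter>{S. nonlocal_subalgebra (Gr V F) ?v YG S \<and> ?G \<subseteq> S}" using all by blast
    show "\<Inter>{S. nonlocal_subalgebra (Gr V F) ?v YG S \<and> ?G \<subseteq> S} \<subseteq> carrier (Gr V F)" using carr_sub Gc by blast
  qed
  thus ?thesis using TF1 Gc unfolding generating_subset_def by blast
qed

end

theorem proposition2p10:
  fixes V :: "(complex, 'v) module" and vac :: 'v and Y :: "'v vop"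
    and F :: "int \<Rightarrow> 'v set" and T :: "'v set"
  assumes nva: "nonlocal_va V vac Y"
    and subsp: "\<forall>n. submodule (F n) CR V"
    and incr: "\<forall>n. F n \<subseteq> F (n + 1)"
    and vac_F0: "vac \<in> F 0"
    and compat: "\<forall>a b k m n. a \<in> F k \<longrightarrow> b \<in> F n \<longrightarrow> Y a m b \<in> F (k + n - m - 1)"
  shows "\<exists>YG :: (int \<Rightarrow> 'v set) vop.
           graded_nonlocal_va (Gr V F) (gr_hom V F 0 vac) YG (gr_grading V F) \<and>
           (\<forall>a b m n k. a \<in> F m \<longrightarrow> b \<in> F n \<longrightarrow>
              YG (gr_hom V F m a) k (gr_hom V F n b) = gr_hom V F (m + n - k - 1) (Y a k b)) \<and>
           ((generating_subset V vac Y T \<and> F = assoc_filtration V vac Y T) \<longrightarrow>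
              T \<subseteq> F 1 \<and> generating_subset (Gr V F) (gr_hom V F 0 vac) YG (gr_hom V F 1 ` T))"
proof -
  interpret f: filt V vac Y F
  proof (rule filt.intro[OF nva])
    show "\<And>n. submodule (F n) CR V" using subsp by blast
    show "\<And>n. F n \<subseteq> F (n + 1)" using incr by blast
    show "vac \<in> F 0" by (rule vac_F0)
    fix a b k m n assume "a \<in> F k" "b \<in> F n"
    thus "Y a m b \<in> F (k + n - m - 1)" using compat by blast
  qed
  have 1: "graded_nonlocal_va (Gr V F) (gr_hom V F 0 vac) f.YG (gr_grading V F)" by (rule f.Gr_graded)
  have 2: "\<forall>a b m n k. a \<in> F m \<longrightarrow> b \<in> F n \<longrightarrow>
              f.YG (gr_hom V F m a) k (gr_hom V F n b) = gr_hom V F (m + n - k - 1) (Y a k b)"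
    using f.YG_hom by blast
  have 3: "(generating_subset V vac Y T \<and> F = assoc_filtration V vac Y T) \<longrightarrow>
              T \<subseteq> F 1 \<and> generating_subset (Gr V F) (gr_hom V F 0 vac) f.YG (gr_hom V F 1 ` T)"
    using f.gen_part by blast
  show ?thesis by (rule exI[of _ f.YG], rule conjI[OF 1 conjI[OF 2 3]])
qed


end
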